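(* Let $V$ and $W$ be pfd $B$-persistence modules and $\epsilon\ge0$. (1) $\mathscr{B}_{2\epsilon}(V^{\mathcal{L}})=\mathscr{B}(V^{\mathcal{L}})$ and $\mathscr{B}_{2\epsilon}(W^{\mathcal{L}})=\mathscr{B}(W^{\mathcal{L}})$. (2) Let $G$ be the bipartite graph with vertex multisets $\mathscr{B}(V^{\mathcal{L}})$ and $\mathscr{B}(W^{\mathcal{L}})$, with an edge between $M$ and $N$ iff $M$ and $N$ are $\Lambda_\epsilon$-interleaved. Suppose $V^{\mathcal{L}}$ and $W^{\mathcal{L}}$ are $\Lambda_\epsilon$-interleaved. Then: - the full subgraph $G(\mathscr{B}_{2\epsilon}(V^{\mathcal{L}}),\mathscr{B}(W^{\mathcal{L}}))$ satisfies Hall's condition (H): every finite $X\subseteq\mathscr{B}_{2\epsilon}(V^{\mathcal{L}})$ has $|X|\le|N(X)|$; - the full subgraph $G(\mathscr{B}(V^{\mathcal{L}}),\mathscr{B}_{2\epsilon}(W^{\mathcal{L}}))$ satisfies (H'): every finite $Y\subseteq\mathscr{B}_{2\epsilon}(W^{\mathcal{L}})$ has $|Y|\le|N(Y)|$. Here $N(\cdot)$ denotes the set of neighbours in $G$. Consequently, if $V^{\mathcal{L}}$ and $W^{\mathcal{L}}$ are $\Lambda_\epsilon$-interleaved, then there exists a bottleneck $\Lambda_\epsilon$-interleaving between them.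
   Context: Let $k$ be a field. The bipath poset $B$ has underlying set $(\mathbb{R}\times\{1,2\})\sqcup\{-\infty,+\infty\}$. Its order is: $x\le y$ iff $x=-\infty$, or $y=+\infty$, or $x=(s,i)$, $y=(t,i)$ with the same $i$ and $s\le t$. $B$-persistence modules are functors from $B$ (as a category) to $k$-vector spaces; pfd means all spaces are finite-dimensional. An interval of $B$ is a nonempty convex and connected subset. Every pfd $B$-module decomposes uniquely (up to isomorphism and permutation) into interval modules $k_I$; $\mathscr{B}(V)$ is the multiset of these summands (elements counted with multiplicity, each a separate vertex). $\mathcal{L}$ is the set of intervals $\neq B$ containing $-\infty$. $V^{\mathcal{L}}$ is the direct sum of the interval summands of $V$ whose interval lies in $\mathcal{L}$. For $\epsilon\ge0$, $\Lambda_\epsilon$ sends $(r,i)\mapsto(r+\epsilon,i)$ and fixes $\pm\infty$. Then: - $V(\epsilon)_b=V_{\Lambda_\epsilon b}$ and $V(\epsilon)(b,b')=V(\Lambda_\epsilon b,\Lambda_\epsilon b')$; $\phi(\epsilon)$ has components $\phi_{\Lambda_\epsilon b}$; - $V_{0\to\epsilon}$ has components $V(b,\Lambda_\epsilon b)$; - $V$ is $\Lambda_\epsilon$-trivial if $V_{0\to\epsilon}=0$, and $\Lambda_\epsilon$-significant otherwise; - $\mathscr{B}_{2\epsilon}(V)$ is the submultiset of $\Lambda_{2\epsilon}$-significant summands in $\mathscr{B}(V)$; - a $\Lambda_\epsilon$-interleaving is a pair $\alpha\colon V\to W(\epsilon)$, $\beta\colon W\to V(\epsilon)$ with $\beta(\epsilon)\alpha=V_{0\to2\epsilon}$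 and $\alpha(\epsilon)\beta=W_{0\to2\epsilon}$; - a bottleneck $\Lambda_\epsilon$-interleaving is a bijection $\sigma$ between submultisets of $\mathscr{B}(V)$ and $\mathscr{B}(W)$ such that all unmatched summands are $\Lambda_{2\epsilon}$-trivial and each matched pair is $\Lambda_\epsilon$-interleaved. A full subgraph $G(X',Y')$ has vertex sets $X'$, $Y'$ and all edges of $G$ between them. *)

theory Defs
  imports Complex_Main
begin

datatype bidx = One | Two

datatype bipath = NegInf | PosInf | Pt real bidx

fun bp_le :: "bipath \<Rightarrow> bipath \<Rightarrow> bool" where
  "bp_le NegInf _ = True"
| "bp_le _ PosInf = True"
| "bp_le (Pt s i) (Pt t j) = (i = j \<and> s \<le> t)"
| "bp_le _ _ = False"

fun shift :: "real \<Rightarrow> bipath \<Rightarrow> bipath" where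
  "shift e (Pt r i) = Pt (r + e) i"
| "shift e NegInf = NegInf"
| "shift e PosInf = PosInf"

definition bp_convex :: "bipath set \<Rightarrow> bool" where
  "bp_convex I \<longleftrightarrow> (\<forall>x\<in>I. \<forall>z\<in>I. \<forall>y. bp_le x y \<and> bp_le y z \<longrightarrow> y \<in> I)"

definition bp_connected :: "bipath set \<Rightarrow> bool" where
  "bp_connected I \<longleftrightarrow> (\<forall>x\<in>I. \<forall>y\<in>I. \<exists>p :: bipath list. p \<noteq> [] \<and> hd p = x \<and> last p = y
      \<and> set p \<subseteq> I
      \<and> (\<forall>i. Suc i < length p \<longrightarrow> bp_le (p ! i) (p ! Suc i) \<or> bp_le (p ! Suc i) (p ! i)))"

definition bp_interval :: "bipath set \<Rightarrow> bool" where
  "bp_interval I \<longleftrightarrow> I \<noteq> {} \<and> bp_convex I \<and> bp_connected I"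

definition Lset :: "bipath set set" where
  "Lset = {I. bp_interval I \<and> I \<noteq> UNIV \<and> NegInf \<in> I}"

text \<open>A B-module is represented inside an ambient k-vector space 'v (with scalar
multiplication s): a family of subspaces V_b and maps V(b,b'), meaningful on V_b.\<close>
type_synonym 'v pmod = "(bipath \<Rightarrow> 'v set) \<times> (bipath \<Rightarrow> bipath \<Rightarrow> 'v \<Rightarrow> 'v)"

definition lin_on :: "('k \<Rightarrow> 'v::ab_group_add \<Rightarrow> 'v) \<Rightarrow> ('k \<Rightarrow> 'w::ab_group_add \<Rightarrow> 'w)
    \<Rightarrow> 'v set \<Rightarrow> 'w set \<Rightarrow> ('v \<Rightarrow> 'w) \<Rightarrow> bool" where
  "lin_on s1 s2 A C f \<longleftrightarrow> f ` A \<subseteq> C \<and> (\<forall>x\<in>A. \<forall>y\<in>A. f (x + y) = f x + f y)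
     \<and> (\<forall>c. \<forall>x\<in>A. f (s1 c x) = s2 c (f x))"

definition is_pmod :: "('k::field \<Rightarrow> 'v::ab_group_add \<Rightarrow> 'v) \<Rightarrow> 'v pmod \<Rightarrow> bool" where
  "is_pmod s V \<longleftrightarrow> (\<forall>b. module.subspace s (fst V b))
     \<and> (\<forall>b b'. bp_le b b' \<longrightarrow> lin_on s s (fst V b) (fst V b') (snd V b b'))
     \<and> (\<forall>b. \<forall>x\<in>fst V b. snd V b b x = x)
     \<and> (\<forall>b b' b''. bp_le b b' \<longrightarrow> bp_le b' b'' \<longrightarrow>
          (\<forall>x\<in>fst V b. snd V b' b'' (snd V b b' x) = snd V b b'' x))"

definition is_pfd :: "('k::field \<Rightarrow> 'v::ab_group_add \<Rightarrow> 'v) \<Rightarrow> 'v pmod \<Rightarrow> bool" where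
  "is_pfd s V \<longleftrightarrow> is_pmod s V \<and>
     (\<forall>b. \<exists>S. finite S \<and> S \<subseteq> fst V b \<and> module.span s S = fst V b)"

definition is_hom :: "('k::field \<Rightarrow> 'v::ab_group_add \<Rightarrow> 'v) \<Rightarrow> ('k \<Rightarrow> 'w::ab_group_add \<Rightarrow> 'w)
    \<Rightarrow> 'v pmod \<Rightarrow> 'w pmod \<Rightarrow> (bipath \<Rightarrow> 'v \<Rightarrow> 'w) \<Rightarrow> bool" where
  "is_hom s1 s2 V W \<phi> \<longleftrightarrow> (\<forall>b. lin_on s1 s2 (fst V b) (fst W b) (\<phi> b))
     \<and> (\<forall>b b'. bp_le b b' \<longrightarrow> (\<forall>x\<in>fst V b. snd W b b' (\<phi> b x) = \<phi> b' (snd V b b' x)))"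

definition pshift :: "real \<Rightarrow> 'v pmod \<Rightarrow> 'v pmod" where
  "pshift e V = (\<lambda>b. fst V (shift e b), \<lambda>b b'. snd V (shift e b) (shift e b'))"

definition hshift :: "real \<Rightarrow> (bipath \<Rightarrow> 'v \<Rightarrow> 'w) \<Rightarrow> (bipath \<Rightarrow> 'v \<Rightarrow> 'w)" where
  "hshift e \<phi> = (\<lambda>b. \<phi> (shift e b))"

definition transl :: "real \<Rightarrow> 'v pmod \<Rightarrow> (bipath \<Rightarrow> 'v \<Rightarrow> 'v)" where
  "transl e V = (\<lambda>b. snd V b (shift e b))"

definition iso_pmod :: "('k::field \<Rightarrow> 'v::ab_group_add \<Rightarrow> 'v) \<Rightarrow> ('k \<Rightarrow> 'w::ab_group_add \<Rightarrow> 'w)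
    \<Rightarrow> 'v pmod \<Rightarrow> 'w pmod \<Rightarrow> bool" where
  "iso_pmod s1 s2 V W \<longleftrightarrow> (\<exists>\<phi>. is_hom s1 s2 V W \<phi> \<and> (\<forall>b. bij_betw (\<phi> b) (fst V b) (fst W b)))"

definition interval_mod :: "bipath set \<Rightarrow> ('k::field) pmod" where
  "interval_mod I = (\<lambda>b. if b \<in> I then UNIV else {0},
                     \<lambda>b b'. if b \<in> I \<and> b' \<in> I then id else (\<lambda>_. 0))"

definition shift_trivial :: "real \<Rightarrow> ('v::zero) pmod \<Rightarrow> bool" where
  "shift_trivial e V \<longleftrightarrow> (\<forall>b. \<forall>x\<in>fst V b. transl e V b x = 0)"

definition interleaved :: "('k::field \<Rightarrow> 'v::ab_group_add \<Rightarrow> 'v) \<Rightarrow> ('k \<Rightarrow> 'w::ab_group_add \<Rightarrow> 'w)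
    \<Rightarrow> real \<Rightarrow> 'v pmod \<Rightarrow> 'w pmod \<Rightarrow> bool" where
  "interleaved s1 s2 e V W \<longleftrightarrow> (\<exists>\<alpha> \<beta>.
      is_hom s1 s2 V (pshift e W) \<alpha> \<and> is_hom s2 s1 W (pshift e V) \<beta>
    \<and> (\<forall>b. \<forall>x\<in>fst V b. hshift e \<beta> b (\<alpha> b x) = transl (2 * e) V b x)
    \<and> (\<forall>b. \<forall>x\<in>fst W b. hshift e \<alpha> b (\<beta> b x) = transl (2 * e) W b x))"

text \<open>A submodule of V: a family of subspaces closed under the structure maps of V;
  as a module it is (U, snd V).\<close>
definition submod :: "('k::field \<Rightarrow> 'v::ab_group_add \<Rightarrow> 'v) \<Rightarrow> 'v pmod \<Rightarrow> (bipath \<Rightarrow> 'v set) \<Rightarrow> bool" where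
  "submod s V U \<longleftrightarrow> (\<forall>b. module.subspace s (U b) \<and> U b \<subseteq> fst V b)
     \<and> (\<forall>b b'. bp_le b b' \<longrightarrow> snd V b b' ` U b \<subseteq> U b')"

definition sum_set :: "'j set \<Rightarrow> ('j \<Rightarrow> bipath \<Rightarrow> 'v::comm_monoid_add set) \<Rightarrow> bipath \<Rightarrow> 'v set" where
  "sum_set J U b = {sum u F | F u. finite F \<and> F \<subseteq> J \<and> (\<forall>j\<in>F. u j \<in> U j b)}"

definition indep_family :: "'j set \<Rightarrow> ('j \<Rightarrow> bipath \<Rightarrow> 'v::comm_monoid_add set) \<Rightarrow> bipath \<Rightarrow> bool" where
  "indep_family J U b \<longleftrightarrow> (\<forall>F u. finite F \<and> F \<subseteq> J \<and> (\<forall>j\<in>F. u j \<in> U j b) \<and> sum u F = 0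
      \<longrightarrow> (\<forall>j\<in>F. u j = 0))"

text \<open>The multiset B(V) is
  the index set J, vertex j standing for the summand (U j, snd V).\<close>
definition interval_decomp :: "('k::field \<Rightarrow> 'v::ab_group_add \<Rightarrow> 'v) \<Rightarrow> 'v pmod
    \<Rightarrow> 'j set \<Rightarrow> ('j \<Rightarrow> bipath \<Rightarrow> 'v set) \<Rightarrow> ('j \<Rightarrow> bipath set) \<Rightarrow> bool" where
  "interval_decomp s V J U I \<longleftrightarrow>
     (\<forall>j\<in>J. submod s V (U j) \<and> bp_interval (I j)
             \<and> iso_pmod s ((*) :: 'k \<Rightarrow> 'k \<Rightarrow> 'k) (U j, snd V) (interval_mod (I j)))
   \<and> (\<forall>b. fst V b = sum_set J U b \<and> indep_family J U b)"

text \<open>Indices of the summands of V lying in L, i.e. B(V^L).\<close>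
definition BL :: "'j set \<Rightarrow> ('j \<Rightarrow> bipath set) \<Rightarrow> 'j set" where
  "BL J I = {j \<in> J. I j \<in> Lset}"

text \<open>V^L: the direct sum of the summands of V whose interval lies in L.\<close>
definition modL :: "'v::comm_monoid_add pmod \<Rightarrow> 'j set \<Rightarrow> ('j \<Rightarrow> bipath \<Rightarrow> 'v set) \<Rightarrow> ('j \<Rightarrow> bipath set) \<Rightarrow> 'v pmod" where
  "modL V J U I = (sum_set (BL J I) U, snd V)"

text \<open>B_{e}(X): the sub-multiset of Lambda_e-significant summands among the indices X.\<close>
definition Bsig :: "real \<Rightarrow> 'v::zero pmod \<Rightarrow> 'j set \<Rightarrow> ('j \<Rightarrow> bipath \<Rightarrow> 'v set) \<Rightarrow> 'j set" where
  "Bsig e V X U = {j \<in> X. \<not> shift_trivial e (U j, snd V)}"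

end

theory Submission
  imports Defs "HOL-Library.Product_Lexorder"
begin

lemma shift_2e: "shift (2*e) b = shift e (shift e b)"
  by (cases b) auto

lemma shift_Neg[simp]: "shift e NegInf = NegInf" by simp

lemma bp_le_shift: "bp_le b b' \<Longrightarrow> bp_le (shift e b) (shift e b')"
  by (cases b; cases b') auto

lemma interval_mod_fst: "fst (interval_mod I) b = (if b \<in> I then UNIV else {0})"
  by (simp add: interval_mod_def)

lemma interval_mod_snd: "snd (interval_mod I) b b' = (if b \<in> I \<and> b' \<in> I then id else (\<lambda>_. 0))"
  by (simp add: interval_mod_def)

lemma lin_on_0: "lin_on s1 s2 A C f \<Longrightarrow> 0 \<in> A \<Longrightarrow> f 0 = 0"
  unfolding lin_on_def by (metis add.right_neutral add_left_cancel)

lemma lin_on_sum: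
  assumes "lin_on s1 s2 A C f" "0 \<in> A" "\<forall>x\<in>A. \<forall>y\<in>A. x + y \<in> A"
    and "finite F" "\<forall>i\<in>F. u i \<in> A"
  shows "f (sum u F) = (\<Sum>i\<in>F. f (u i))"
  using assms(4,5)
proof (induction F rule: finite_induct)
  case empty
  then show ?case using lin_on_0[OF assms(1,2)] by simp
next
  case (insert x F)
  have "sum u F \<in> A"
    using insert(1) insert(4) assms(2,3) by (induction F rule: finite_induct) auto
  then show ?case using insert assms(1) unfolding lin_on_def by auto
qed

lemma Lset_NegInf: "I \<in> Lset \<Longrightarrow> NegInf \<in> I"
  by (simp add: Lset_def)

lemma bp_le_Pos[simp]: "bp_le y PosInf"
  by (cases y) auto

lemma Lset_PosInf: "I \<in> Lset \<Longrightarrow> PosInf \<notin> I"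
proof
  assume a: "I \<in> Lset" "PosInf \<in> I"
  then have n: "NegInf \<in> I" and c: "bp_convex I" and u: "I \<noteq> UNIV" by (auto simp: Lset_def bp_interval_def)
  have "y \<in> I" for y
    using c n a(2) unfolding bp_convex_def by (meson bp_le.simps(1) bp_le_Pos)
  with u show False by auto
qed

lemma Lset_shift_mono: "I \<in> Lset \<Longrightarrow> bp_le b b' \<Longrightarrow> b' \<in> I \<Longrightarrow> b \<in> I"
proof -
  assume a: "I \<in> Lset" "bp_le b b'" "b' \<in> I"
  then have "NegInf \<in> I" "bp_convex I" by (auto simp: Lset_def bp_interval_def)
  then show ?thesis unfolding bp_convex_def using a by (meson bp_le.simps(1))
qed

lemma Lset_down: "I \<in> Lset \<Longrightarrow> Pt t i \<in> I \<Longrightarrow> s \<le> t \<Longrightarrow> Pt s i \<in> I"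
  by (erule Lset_shift_mono) auto

definition phiD :: "('k::field \<Rightarrow> 'v::ab_group_add \<Rightarrow> 'v) \<Rightarrow> 'v pmod \<Rightarrow> ('j \<Rightarrow> bipath \<Rightarrow> 'v set)
   \<Rightarrow> ('j \<Rightarrow> bipath set) \<Rightarrow> 'j \<Rightarrow> bipath \<Rightarrow> 'v \<Rightarrow> 'k" where
  "phiD s V U I j = (SOME \<phi>. is_hom s (*) (U j, snd V) (interval_mod (I j)) \<phi>
      \<and> (\<forall>b. bij_betw (\<phi> b) (U j b) (fst (interval_mod (I j) :: 'k pmod) b)))"

definition genD :: "('k::field \<Rightarrow> 'v::ab_group_add \<Rightarrow> 'v) \<Rightarrow> 'v pmod \<Rightarrow> ('j \<Rightarrow> bipath \<Rightarrow> 'v set)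
   \<Rightarrow> ('j \<Rightarrow> bipath set) \<Rightarrow> 'j \<Rightarrow> 'v" where
  "genD s V U I j = inv_into (U j NegInf) (phiD s V U I j NegInf) 1"

locale decomp = vector_space s for s :: "'k::field \<Rightarrow> 'v::ab_group_add \<Rightarrow> 'v" +
  fixes V :: "'v pmod" and J :: "'j set" and U :: "'j \<Rightarrow> bipath \<Rightarrow> 'v set" and I :: "'j \<Rightarrow> bipath set"
  assumes pfd: "is_pfd s V" and dec: "interval_decomp s V J U I"
begin

notation s (infixr \<open>*s\<close> 75)

abbreviation "phi \<equiv> phiD s V U I"
abbreviation "gen \<equiv> genD s V U I"
abbreviation "BJ \<equiv> BL J I"

lemma pmod: "is_pmod s V" using pfd by (simp add: is_pfd_def)

lemma V_sub: "subspace (fst V b)" using pmod by (simp add: is_pmod_def)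
lemma V_lin: "bp_le b b' \<Longrightarrow> lin_on s s (fst V b) (fst V b') (snd V b b')"
  using pmod by (simp add: is_pmod_def)
lemma V_id: "x \<in> fst V b \<Longrightarrow> snd V b b x = x"
  using pmod by (simp add: is_pmod_def)
lemma V_comp: "bp_le b b' \<Longrightarrow> bp_le b' b'' \<Longrightarrow> x \<in> fst V b \<Longrightarrow> snd V b' b'' (snd V b b' x) = snd V b b'' x"
  using pmod unfolding is_pmod_def by blast
lemma V_in: "bp_le b b' \<Longrightarrow> x \<in> fst V b \<Longrightarrow> snd V b b' x \<in> fst V b'"
  using V_lin unfolding lin_on_def by blast
lemma V_scale: "bp_le b b' \<Longrightarrow> x \<in> fst V b \<Longrightarrow> snd V b b' (c *s x) = c *s snd V b b' x"
  using V_lin unfolding lin_on_def by blast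
lemma V_zero: "bp_le b b' \<Longrightarrow> snd V b b' 0 = 0"
  using lin_on_0[OF V_lin] subspace_0[OF V_sub] by blast
lemma V_sum: "bp_le b b' \<Longrightarrow> finite F \<Longrightarrow> \<forall>i\<in>F. u i \<in> fst V b \<Longrightarrow> snd V b b' (sum u F) = (\<Sum>i\<in>F. snd V b b' (u i))"
  by (rule lin_on_sum[OF V_lin]) (auto intro: subspace_0[OF V_sub] subspace_add[OF V_sub])

lemma jJ: "j \<in> J \<Longrightarrow> submod s V (U j) \<and> bp_interval (I j)
             \<and> iso_pmod s ((*) :: 'k \<Rightarrow> 'k \<Rightarrow> 'k) (U j, snd V) (interval_mod (I j))"
  using dec by (simp add: interval_decomp_def)

lemma U_sub: "j \<in> J \<Longrightarrow> subspace (U j b)" using jJ by (simp add: submod_def)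
lemma U_le: "j \<in> J \<Longrightarrow> U j b \<subseteq> fst V b" using jJ by (simp add: submod_def)
lemma U_map: "j \<in> J \<Longrightarrow> bp_le b b' \<Longrightarrow> x \<in> U j b \<Longrightarrow> snd V b b' x \<in> U j b'"
  using jJ unfolding submod_def by blast

lemma fstV: "fst V b = sum_set J U b" using dec by (simp add: interval_decomp_def)
lemma indep: "indep_family J U b" using dec by (simp add: interval_decomp_def)

lemma phi_props: "j \<in> J \<Longrightarrow> is_hom s (*) (U j, snd V) (interval_mod (I j)) (phi j)
      \<and> (\<forall>b. bij_betw (phi j b) (U j b) (fst (interval_mod (I j) :: 'k pmod) b))"
proof -
  assume "j \<in> J"
  then have "\<exists>\<phi>. is_hom s (*) (U j, snd V) (interval_mod (I j)) \<phi>
      \<and> (\<forall>b. bij_betw (\<phi> b) (U j b) (fst (interval_mod (I j) :: 'k pmod) b))"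
    using jJ by (simp add: iso_pmod_def)
  then show ?thesis unfolding phiD_def by (rule someI_ex)
qed

lemma phi_lin: "j \<in> J \<Longrightarrow> lin_on s (*) (U j b) (fst (interval_mod (I j) :: 'k pmod) b) (phi j b)"
  using phi_props by (simp add: is_hom_def)

lemma phi_scale: "j \<in> J \<Longrightarrow> x \<in> U j b \<Longrightarrow> phi j b (c *s x) = c * phi j b x"
  using phi_lin unfolding lin_on_def by blast
lemma phi_add: "j \<in> J \<Longrightarrow> x \<in> U j b \<Longrightarrow> y \<in> U j b \<Longrightarrow> phi j b (x + y) = phi j b x + phi j b y"
  using phi_lin unfolding lin_on_def by blast
lemma phi_zero: "j \<in> J \<Longrightarrow> phi j b 0 = 0"
  using lin_on_0[OF phi_lin] subspace_0[OF U_sub] by blast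

lemma phi_bij: "j \<in> J \<Longrightarrow> bij_betw (phi j b) (U j b) (fst (interval_mod (I j) :: 'k pmod) b)"
  using phi_props by blast

lemma phi_inj: "j \<in> J \<Longrightarrow> x \<in> U j b \<Longrightarrow> y \<in> U j b \<Longrightarrow> phi j b x = phi j b y \<Longrightarrow> x = y"
  using phi_bij unfolding bij_betw_def inj_on_def by blast

lemma phi_out: "j \<in> J \<Longrightarrow> b \<notin> I j \<Longrightarrow> x \<in> U j b \<Longrightarrow> phi j b x = 0"
  using phi_bij[of j b] unfolding bij_betw_def by (auto simp: interval_mod_fst)

lemma U_out: "j \<in> J \<Longrightarrow> b \<notin> I j \<Longrightarrow> x \<in> U j b \<Longrightarrow> x = 0"
  using phi_inj[of j 0 b x] phi_out[of j b] phi_zero[of j b] subspace_0[OF U_sub] by metis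

lemma phi_nat: "j \<in> J \<Longrightarrow> bp_le b b' \<Longrightarrow> x \<in> U j b \<Longrightarrow>
   phi j b' (snd V b b' x) = (if b \<in> I j \<and> b' \<in> I j then phi j b x else 0)"
proof -
  assume a: "j \<in> J" "bp_le b b'" "x \<in> U j b"
  have "\<forall>b b'. bp_le b b' \<longrightarrow> (\<forall>x\<in>fst (U j, snd V) b. snd (interval_mod (I j) :: 'k pmod) b b' (phi j b x)
        = phi j b' (snd (U j, snd V) b b' x))"
    using phi_props[OF a(1)] unfolding is_hom_def by blast
  then have "snd (interval_mod (I j) :: 'k pmod) b b' (phi j b x) = phi j b' (snd V b b' x)"
    using a by auto
  then show ?thesis by (auto simp: interval_mod_snd split: if_splits)
qed

lemma BJ_J: "j \<in> BJ \<Longrightarrow> j \<in> J" by (simp add: BL_def)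
lemma BJ_L: "j \<in> BJ \<Longrightarrow> I j \<in> Lset" by (simp add: BL_def)
lemma BJ_Neg: "j \<in> BJ \<Longrightarrow> NegInf \<in> I j" using BJ_L Lset_NegInf by blast

lemma gen_props: "j \<in> BJ \<Longrightarrow> gen j \<in> U j NegInf \<and> phi j NegInf (gen j) = 1"
proof -
  assume a: "j \<in> BJ"
  have b: "bij_betw (phi j NegInf) (U j NegInf) UNIV"
    using phi_bij[OF BJ_J[OF a], of NegInf] BJ_Neg[OF a] by (simp add: interval_mod_fst)
  then show ?thesis unfolding genD_def
    by (metis UNIV_I bij_betw_def f_inv_into_f inv_into_into)
qed

lemma gen_in: "j \<in> BJ \<Longrightarrow> gen j \<in> U j NegInf" using gen_props by blast
lemma phi_gen: "j \<in> BJ \<Longrightarrow> phi j NegInf (gen j) = 1" using gen_props by blast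
lemma gen_nz: "j \<in> BJ \<Longrightarrow> gen j \<noteq> 0"
  using phi_gen phi_zero BJ_J by fastforce

lemma gen_b_in: "j \<in> BJ \<Longrightarrow> snd V NegInf b (gen j) \<in> U j b"
  using U_map[OF BJ_J] gen_in by simp

lemma phi_gen_b: "j \<in> BJ \<Longrightarrow> phi j b (snd V NegInf b (gen j)) = (if b \<in> I j then 1 else 0)"
  using phi_nat[OF BJ_J, of j NegInf b "gen j"] gen_in phi_gen BJ_Neg by auto

lemma gen_b_zero: "j \<in> BJ \<Longrightarrow> snd V NegInf b (gen j) = 0 \<longleftrightarrow> b \<notin> I j"
  using phi_gen_b[of j b] phi_zero[OF BJ_J, of j b] U_out[OF BJ_J _ gen_b_in] by force

lemma U_repr: "j \<in> BJ \<Longrightarrow> b \<in> I j \<Longrightarrow> x \<in> U j b \<Longrightarrow> x = phi j b x *s snd V NegInf b (gen j)"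
proof -
  assume a: "j \<in> BJ" "b \<in> I j" "x \<in> U j b"
  have "phi j b (phi j b x *s snd V NegInf b (gen j)) = phi j b x"
    using phi_scale[OF BJ_J[OF a(1)] gen_b_in[OF a(1)]] phi_gen_b[OF a(1)] a(2) by simp
  then show ?thesis
    using phi_inj[OF BJ_J[OF a(1)] a(3)] subspace_scale[OF U_sub[OF BJ_J[OF a(1)]] gen_b_in[OF a(1)]]
    by metis
qed

lemma U_repr0: "j \<in> BJ \<Longrightarrow> x \<in> U j NegInf \<Longrightarrow> x = phi j NegInf x *s gen j"
  using U_repr[of j NegInf x] BJ_Neg V_id gen_in U_le BJ_J by (metis subsetD)

lemma indep_zero: "F \<subseteq> J \<Longrightarrow> finite F \<Longrightarrow> \<forall>j\<in>F. u j \<in> U j b \<Longrightarrow> sum u F = 0 \<Longrightarrow> \<forall>j\<in>F. u j = 0"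
  using indep[of b] unfolding indep_family_def by blast

lemma gen_unique0: "F \<subseteq> BJ \<Longrightarrow> finite F \<Longrightarrow> (\<Sum>j\<in>F. c j *s gen j) = 0 \<Longrightarrow> \<forall>j\<in>F. c j = 0"
proof -
  assume a: "F \<subseteq> BJ" "finite F" "(\<Sum>j\<in>F. c j *s gen j) = 0"
  have "\<forall>j\<in>F. c j *s gen j = 0"
    apply (rule indep_zero[of F "\<lambda>j. c j *s gen j" NegInf])
    using a BJ_J gen_in subspace_scale[OF U_sub] by auto
  then show ?thesis using gen_nz a(1) by auto
qed

lemma gen_unique: "F \<subseteq> BJ \<Longrightarrow> finite F \<Longrightarrow> (\<Sum>j\<in>F. c j *s gen j) = (\<Sum>j\<in>F. d j *s gen j) \<Longrightarrow> \<forall>j\<in>F. c j = d j"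
proof -
  assume a: "F \<subseteq> BJ" "finite F" "(\<Sum>j\<in>F. c j *s gen j) = (\<Sum>j\<in>F. d j *s gen j)"
  have "(\<Sum>j\<in>F. (c j - d j) *s gen j) = 0"
    using a(3) by (simp add: scale_left_diff_distrib sum_subtractf)
  then show ?thesis using gen_unique0[OF a(1,2), of "\<lambda>j. c j - d j"] by auto
qed

lemma gen_inj: "inj_on gen BJ"
proof (rule inj_onI, rule ccontr)
  fix j j' assume a: "j \<in> BJ" "j' \<in> BJ" "gen j = gen j'" "j \<noteq> j'"
  let ?c = "\<lambda>i. if i = j then 1 else if i = j' then -1 else (0::'k)"
  have "(\<Sum>i\<in>{j,j'}. ?c i *s gen i) = 0" using a by simp
  then show False using gen_unique0[of "{j,j'}" ?c] a by auto
qed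

lemma gen_indep: "independent (gen ` BJ)"
proof
  assume "dependent (gen ` BJ)"
  then obtain t u where t: "finite t" "t \<subseteq> gen ` BJ" "(\<Sum>v\<in>t. u v *s v) = 0" "\<exists>v\<in>t. u v \<noteq> 0"
    unfolding dependent_explicit by blast
  define F where "F = {j\<in>BJ. gen j \<in> t}"
  have tF: "t = gen ` F" using t(2) unfolding F_def by auto
  have injF: "inj_on gen F" using gen_inj unfolding F_def by (auto intro: inj_on_subset)
  have fF: "finite F" using t(1) tF injF finite_imageD by blast
  have "(\<Sum>j\<in>F. u (gen j) *s gen j) = 0"
    using t(3) tF injF by (simp add: sum.reindex)
  then have "\<forall>j\<in>F. u (gen j) = 0" using gen_unique0[of F "\<lambda>j. u (gen j)"] fF F_def by auto
  then show False using t(4) tF by auto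
qed

lemma finite_BJ: "finite BJ"
proof -
  obtain S where S: "finite S" "S \<subseteq> fst V NegInf" "span S = fst V NegInf"
    using pfd unfolding is_pfd_def by blast
  have "gen ` BJ \<subseteq> span S" using S(3) gen_in U_le BJ_J by blast
  then have "finite (gen ` BJ)" using independent_span_bound[OF S(1) gen_indep] by blast
  then show ?thesis using finite_imageD gen_inj by blast
qed

lemma repr: "x \<in> sum_set BJ U NegInf \<Longrightarrow> \<exists>c. x = (\<Sum>j\<in>BJ. c j *s gen j)"
proof -
  assume "x \<in> sum_set BJ U NegInf"
  then obtain F u where F: "x = sum u F" "finite F" "F \<subseteq> BJ" "\<forall>j\<in>F. u j \<in> U j NegInf"
    unfolding sum_set_def by blast
  define c where "c j = (if j \<in> F then phi j NegInf (u j) else 0)" for j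
  have "(\<Sum>j\<in>BJ. c j *s gen j) = (\<Sum>j\<in>F. c j *s gen j)"
    by (rule sum.mono_neutral_right) (use finite_BJ F in \<open>auto simp: c_def\<close>)
  also have "\<dots> = sum u F"
    by (rule sum.cong) (use F U_repr0 in \<open>auto simp: c_def\<close>)
  finally show ?thesis using F(1) by metis
qed

lemma comb_in: "(\<Sum>j\<in>BJ. c j *s gen j) \<in> sum_set BJ U NegInf"
  unfolding sum_set_def using finite_BJ gen_in subspace_scale[OF U_sub[OF BJ_J]] by blast

lemma sumset_le: "sum_set BJ U b \<subseteq> fst V b"
  unfolding fstV sum_set_def BL_def by blast

lemma sumset_0: "0 \<in> sum_set BJ U b"
  unfolding sum_set_def by (rule CollectI, rule exI[of _ "{}"]) auto

end


definition nbr :: "('a \<Rightarrow> 'b \<Rightarrow> bool) \<Rightarrow> 'b set \<Rightarrow> 'a set \<Rightarrow> 'b set" where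
  "nbr R B S = {b\<in>B. \<exists>a\<in>S. R a b}"

lemma hall_aux:
  "\<forall>A B. finite A \<longrightarrow> finite B \<longrightarrow> card A = n \<longrightarrow> (\<forall>S\<subseteq>A. card S \<le> card (nbr R B S))
     \<longrightarrow> (\<exists>f. inj_on f A \<and> (\<forall>a\<in>A. f a \<in> B \<and> R a (f a)))"
proof (induction n rule: less_induct)
  case (less n)
  show ?case
  proof (intro allI impI)
    fix A B
    assume fA: "finite A" and fB: "finite B" and cA: "card A = n"
      and H: "\<forall>S\<subseteq>A. card S \<le> card (nbr R B S)"
    show "\<exists>f. inj_on f A \<and> (\<forall>a\<in>A. f a \<in> B \<and> R a (f a))"
    proof (cases "A = {}")
      case True
      then show ?thesis by auto
    next
      case nonempty: False
      show ?thesis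
      proof (cases "\<exists>S. S \<noteq> {} \<and> S \<subset> A \<and> card (nbr R B S) \<le> card S")
        case True
        then obtain S where S: "S \<noteq> {}" "S \<subset> A" "card (nbr R B S) \<le> card S" by blast
        have fS: "finite S" using S(2) fA by (meson finite_subset psubset_imp_subset)
        have cS: "card S < n" using psubset_card_mono[OF fA S(2)] cA by simp
        obtain f1 where f1: "inj_on f1 S" "\<forall>a\<in>S. f1 a \<in> B \<and> R a (f1 a)"
        proof -
          have HS: "card T \<le> card (nbr R B T)" if "T \<subseteq> S" for T
            using H[rule_format, of T] that S(2) by auto
          have "\<exists>f. inj_on f S \<and> (\<forall>a\<in>S. f a \<in> B \<and> R a (f a))"
            by (rule less[rule_format, OF cS fS fB refl]) (rule HS)
          then show ?thesis using that by blast
        qed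
        define A' where "A' = A - S"
        define B' where "B' = B - nbr R B S"
        have cA': "card A' < n"
        proof -
          have "card A' = card A - card S" unfolding A'_def using card_Diff_subset[OF fS psubset_imp_subset[OF S(2)]] .
          moreover have "card S > 0" using fS S(1) by (simp add: card_gt_0_iff)
          moreover have "card S \<le> card A" using card_mono[OF fA psubset_imp_subset[OF S(2)]] .
          ultimately show ?thesis using cA by linarith
        qed
        have H': "\<forall>T\<subseteq>A'. card T \<le> card (nbr R B' T)"
        proof (intro allI impI)
          fix T assume T: "T \<subseteq> A'"
          have fT: "finite T" using T fA unfolding A'_def using finite_subset by blast
          have un: "nbr R B (T \<union> S) = nbr R B' T \<union> nbr R B S"
            unfolding nbr_def B'_def by auto
          have dj: "nbr R B' T \<inter> nbr R B S = {}" unfolding nbr_def B'_def by auto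
          have fN: "finite (nbr R B' T)" "finite (nbr R B S)" using fB unfolding nbr_def B'_def by auto
          have "card T + card S = card (T \<union> S)"
            using T fT fS unfolding A'_def by (subst card_Un_disjoint) auto
          also have "\<dots> \<le> card (nbr R B (T \<union> S))" apply (rule H[rule_format]) using T S(2) unfolding A'_def by auto
          also have "\<dots> = card (nbr R B' T) + card (nbr R B S)"
            using un dj fN by (simp add: card_Un_disjoint)
          finally show "card T \<le> card (nbr R B' T)" using S(3) by linarith
        qed
        have fA': "finite A'" "finite B'" using fA fB unfolding A'_def B'_def by auto
        obtain f2 where f2: "inj_on f2 A'" "\<forall>a\<in>A'. f2 a \<in> B' \<and> R a (f2 a)"
        proof -
          have "\<exists>f. inj_on f A' \<and> (\<forall>a\<in>A'. f a \<in> B' \<and> R a (f a))"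
            by (rule less[rule_format, OF cA' fA' refl]) (use H' in blast)
          then show ?thesis using that by blast
        qed
        define f where "f a = (if a \<in> S then f1 a else f2 a)" for a
        have f1N: "\<forall>a\<in>S. f1 a \<in> nbr R B S" using f1 unfolding nbr_def by blast
        have fin: "f a = f1 a" if "a \<in> S" for a using that by (simp add: f_def)
        have fout: "f a = f2 a" if "a \<notin> S" for a using that by (simp add: f_def)
        have f2n: "f2 a \<notin> nbr R B S" if "a \<in> A" "a \<notin> S" for a
          using f2(2) that unfolding A'_def B'_def by blast
        have "inj_on f A"
        proof (rule inj_onI)
          fix x y assume xA: "x \<in> A" and yA: "y \<in> A" and fxy: "f x = f y"
          show "x = y"
          proof (cases "x \<in> S")
            case xS: True
            show ?thesis
            proof (cases "y \<in> S")
              case True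
              then show ?thesis using f1(1) fxy xS fin unfolding inj_on_def by metis
            next
              case False
              then have "f1 x \<noteq> f2 y" using f2n[OF yA] f1N xS by metis
              then show ?thesis using fxy fin[OF xS] fout[OF False] by simp
            qed
          next
            case xS: False
            show ?thesis
            proof (cases "y \<in> S")
              case True
              then have "f1 y \<noteq> f2 x" using f2n[OF xA xS] f1N by metis
              then show ?thesis using fxy fin[OF True] fout[OF xS] by simp
            next
              case False
              then have "x \<in> A'" "y \<in> A'" using xA yA xS unfolding A'_def by auto
              then show ?thesis using f2(1) fxy fout[OF xS] fout[OF False] unfolding inj_on_def by metis
            qed
          qed
        qed
        moreover have "\<forall>a\<in>A. f a \<in> B \<and> R a (f a)"
        proof
          fix a assume "a \<in> A"
          then show "f a \<in> B \<and> R a (f a)"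
            using f1(2) f2(2) fin fout unfolding A'_def B'_def by (cases "a \<in> S") auto
        qed
        ultimately show ?thesis by blast
      next
        case False
        have strict: "\<forall>S. S \<noteq> {} \<and> S \<subset> A \<longrightarrow> card S < card (nbr R B S)"
          using False by (meson not_le)
        obtain a where a: "a \<in> A" using nonempty by blast
        have "card {a} \<le> card (nbr R B {a})" using H[rule_format, of "{a}"] a by simp
        then have "card (nbr R B {a}) \<ge> 1" by simp
        then have "nbr R B {a} \<noteq> {}" by (metis card.empty not_one_le_zero)
        then obtain b where b: "b \<in> B" "R a b" unfolding nbr_def by auto
        define A' where "A' = A - {a}"
        define B' where "B' = B - {b}"
        have cA': "card A' < n"
        proof -
          have "card A' = card A - 1" unfolding A'_def using a fA by (simp add: card_Diff_singleton)
          moreover have "card A > 0" using a fA card_gt_0_iff by blast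
          ultimately show ?thesis using cA by linarith
        qed
        have H': "\<forall>T\<subseteq>A'. card T \<le> card (nbr R B' T)"
        proof (intro allI impI)
          fix T assume T: "T \<subseteq> A'"
          show "card T \<le> card (nbr R B' T)"
          proof (cases "T = {}")
            case True then show ?thesis by simp
          next
            case False
            have "T \<subset> A" using T a unfolding A'_def by auto
            then have "card T < card (nbr R B T)" using strict False by auto
            moreover have "nbr R B' T = nbr R B T - {b}" unfolding nbr_def B'_def by auto
            moreover have "finite (nbr R B T)" using fB unfolding nbr_def by auto
            moreover have "card (nbr R B T - {b}) \<ge> card (nbr R B T) - 1"
              by (simp add: card_Diff_singleton_if)
            ultimately show ?thesis by simp
          qed
        qed
        have fA': "finite A'" "finite B'" using fA fB unfolding A'_def B'_def by auto
        obtain f2 where f2: "inj_on f2 A'" "\<forall>a\<in>A'. f2 a \<in> B' \<and> R a (f2 a)"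
          using less[rule_format, OF cA' fA' refl] H' by blast
        define f where "f = f2(a := b)"
        have "inj_on f A"
        proof (rule inj_onI)
          fix x y assume "x \<in> A" "y \<in> A" "f x = f y"
          show "x = y"
          proof (rule ccontr)
            assume ne: "x \<noteq> y"
            have fb: "\<forall>z\<in>A'. f2 z \<noteq> b" using f2(2) unfolding B'_def by auto
            show False
            proof (cases "x = a")
              case True
              then have "y \<noteq> a" "y \<in> A'" using ne \<open>y \<in> A\<close> unfolding A'_def by auto
              then show False using fb \<open>f x = f y\<close> True unfolding f_def by auto
            next
              case False
              then have xA: "x \<in> A'" using \<open>x \<in> A\<close> unfolding A'_def by auto
              show False
              proof (cases "y = a")
                case True
                then show False using fb xA \<open>f x = f y\<close> False unfolding f_def by auto
              next
                case yF: False
                then have "y \<in> A'" using \<open>y \<in> A\<close> unfolding A'_def by auto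
                then have "f2 x = f2 y" using \<open>f x = f y\<close> False yF unfolding f_def by auto
                then show False using f2(1) xA \<open>y \<in> A'\<close> ne unfolding inj_on_def by blast
              qed
            qed
          qed
        qed
        moreover have "\<forall>a\<in>A. f a \<in> B \<and> R a (f a)"
          using f2 b unfolding f_def A'_def B'_def by auto
        ultimately show ?thesis by blast
      qed
    qed
  qed
qed

lemma hall:
  assumes "finite A" "finite B" "\<forall>S\<subseteq>A. card S \<le> card {b\<in>B. \<exists>a\<in>S. R a b}"
  shows "\<exists>f. inj_on f A \<and> (\<forall>a\<in>A. f a \<in> B \<and> R a (f a))"
proof -
  have X: "\<forall>S\<subseteq>A. card S \<le> card (nbr R B S)" using assms(3) unfolding nbr_def .
  show ?thesis by (rule hall_aux[of "card A" R, rule_format, of A B, OF assms(1,2) refl]) (use X in blast)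
qed


definition br :: "bipath set \<Rightarrow> bidx \<Rightarrow> real set" where "br D i = {t. Pt t i \<in> D}"
definition kr :: "real \<Rightarrow> real set \<Rightarrow> real" where
  "kr M X = (if X = UNIV then M else if X = {} then -M else Sup X)"
definition kc :: "real set \<Rightarrow> nat" where
  "kc X = (if X \<noteq> {} \<and> X \<noteq> UNIV \<and> Sup X \<in> X then 1 else 0)"
definition pot :: "real \<Rightarrow> bipath set \<Rightarrow> real \<times> nat" where
  "pot M D = (kr M (br D One) + kr M (br D Two), kc (br D One) + kc (br D Two))"
definition okb :: "real \<Rightarrow> real \<Rightarrow> real set \<Rightarrow> bool" where
  "okb M e X \<longleftrightarrow> (X \<noteq> {} \<and> X \<noteq> UNIV \<longrightarrow> \<bar>Sup X\<bar> + e < M)"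
definition down :: "real set \<Rightarrow> bool" where
  "down X \<longleftrightarrow> (\<forall>t\<in>X. \<forall>s\<le>t. s \<in> X)"

lemma down_lt: "down X \<Longrightarrow> u \<notin> X \<Longrightarrow> t \<in> X \<Longrightarrow> t < u"
  unfolding down_def by (meson not_le order.strict_implies_order le_less_linear)

lemma down_bdd: "down X \<Longrightarrow> X \<noteq> UNIV \<Longrightarrow> bdd_above X"
proof -
  assume a: "down X" "X \<noteq> UNIV"
  then obtain u where "u \<notin> X" by auto
  then show ?thesis using down_lt[OF a(1)] unfolding bdd_above_def by (meson less_imp_le)
qed

lemma down_sup_le: "down X \<Longrightarrow> X \<noteq> {} \<Longrightarrow> u \<notin> X \<Longrightarrow> Sup X \<le> u"
  by (rule cSup_least) (auto dest: down_lt[of X u] intro: less_imp_le)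

lemma branch_a:
  assumes dX: "down X" and dY: "down Y" and h: "\<forall>t. t + e \<in> X \<longrightarrow> t \<in> Y"
    and oX: "okb M e X" and oY: "okb M e Y" and eM: "e < M" and e0: "0 \<le> e"
  shows "kr M Y \<ge> kr M X - e \<and> (kr M Y = kr M X - e \<longrightarrow> kc Y \<ge> kc X)"
proof (cases "X = UNIV")
  case True
  then have "Y = UNIV" using h by auto
  then show ?thesis using True e0 by (simp add: kr_def kc_def)
next
  case XU: False
  show ?thesis
  proof (cases "X = {}")
    case True
    then have "kc X = 0" by (simp add: kc_def)
    moreover have "kr M Y \<ge> - M - e"
      using oY eM e0 unfolding kr_def okb_def by auto
    ultimately show ?thesis using True by (simp add: kr_def)
  next
    case XE: False
    then obtain x where x: "x \<in> X" by auto
    then have "x - e \<in> Y" using h by (metis diff_add_cancel)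
    then have YE: "Y \<noteq> {}" by auto
    show ?thesis
    proof (cases "Y = UNIV")
      case True
      then show ?thesis using oX XU XE eM e0 unfolding kr_def okb_def by auto
    next
      case YU: False
      have bX: "bdd_above X" using down_bdd[OF dX XU] .
      have bY: "bdd_above Y" using down_bdd[OF dY YU] .
      have le: "Sup X \<le> Sup Y + e"
      proof (rule cSup_least[OF XE])
        fix t assume "t \<in> X"
        then have "t - e \<in> Y" using h by (metis diff_add_cancel)
        then have "t - e \<le> Sup Y" using cSup_upper[OF _ bY] by blast
        then show "t \<le> Sup Y + e" by simp
      qed
      have eq: "Sup Y = Sup X - e \<Longrightarrow> kc Y \<ge> kc X"
      proof -
        assume q: "Sup Y = Sup X - e"
        show ?thesis
        proof (cases "Sup X \<in> X")
          case True
          then have "Sup X - e \<in> Y" using h by (metis diff_add_cancel)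
          then show ?thesis using q YE YU by (simp add: kc_def)
        next
          case False then show ?thesis by (simp add: kc_def)
        qed
      qed
      show ?thesis using le eq XU XE YU YE unfolding kr_def by auto
    qed
  qed
qed

lemma branch_b:
  assumes dX: "down X" and dY: "down Y" and h: "\<forall>t. t + e \<in> X \<longrightarrow> t \<in> Y"
    and w: "t0 + e \<in> Y" "t0 \<notin> X"
    and oX: "okb M e X" and oY: "okb M e Y" and eM: "e < M" and e0: "0 \<le> e"
  shows "kr M Y \<ge> kr M X + e \<and> (kr M Y = kr M X + e \<longrightarrow> kc Y > kc X)"
proof -
  have XU: "X \<noteq> UNIV" using w by auto
  have YE: "Y \<noteq> {}" using w by auto
  show ?thesis
  proof (cases "X = {}")
    case True
    have "kr M Y > - M + e"
    proof (cases "Y = UNIV")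
      case True then show ?thesis using eM e0 by (simp add: kr_def)
    next
      case False then show ?thesis using oY YE unfolding kr_def okb_def by auto
    qed
    then show ?thesis using True by (simp add: kr_def)
  next
    case XE: False
    have sx: "Sup X \<le> t0" using down_sup_le[OF dX XE w(2)] .
    show ?thesis
    proof (cases "Y = UNIV")
      case True
      then show ?thesis using oX XU XE sx unfolding kr_def okb_def by auto
    next
      case YU: False
      have bY: "bdd_above Y" using down_bdd[OF dY YU] .
      have "t0 + e \<le> Sup Y" using cSup_upper[OF w(1) bY] .
      moreover have "Sup Y = Sup X + e \<Longrightarrow> kc Y > kc X"
      proof -
        assume q: "Sup Y = Sup X + e"
        with sx \<open>t0 + e \<le> Sup Y\<close> have "t0 = Sup X" by linarith
        then have "Sup X \<notin> X" "Sup Y \<in> Y" using w q by auto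
        then show ?thesis using YE YU by (simp add: kc_def)
      qed
      ultimately show ?thesis using sx XU XE YU YE unfolding kr_def by auto
    qed
  qed
qed

lemma br_down: "D \<in> Lset \<Longrightarrow> down (br D i)"
  unfolding down_def br_def using Lset_down by blast

lemma shift_Pt: "shift e (Pt t i) = Pt (t + e) i" by simp

lemma pot_lt:
  assumes D: "D \<in> Lset" and E: "E \<in> Lset" and e0: "0 \<le> e" and eM: "e < M"
    and ok: "\<forall>i. okb M e (br D i) \<and> okb M e (br E i)"
    and h: "\<forall>b. shift e b \<in> D \<longrightarrow> b \<in> E"
    and nh: "\<not> (\<forall>b. shift e b \<in> E \<longrightarrow> b \<in> D)"
  shows "pot M D < pot M E"
proof -
  have hi: "\<forall>t. t + e \<in> br D i \<longrightarrow> t \<in> br E i" for i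
  proof (intro allI impI)
    fix t assume "t + e \<in> br D i"
    then have "shift e (Pt t i) \<in> D" unfolding br_def by simp
    then show "t \<in> br E i" using h unfolding br_def by blast
  qed
  obtain b where b: "shift e b \<in> E" "b \<notin> D" using nh by blast
  have bP: "\<exists>t0 i0. b = Pt t0 i0"
  proof (cases b)
    case NegInf then show ?thesis using b Lset_NegInf[OF D] by simp
  next
    case PosInf then show ?thesis using b Lset_PosInf[OF E] by simp
  next
    case (Pt r i) then show ?thesis by blast
  qed
  then obtain t0 i0 where bt: "b = Pt t0 i0" by blast
  have w: "t0 + e \<in> br E i0" "t0 \<notin> br D i0" using b bt unfolding br_def by auto
  have A: "kr M (br E i) \<ge> kr M (br D i) - e \<and> (kr M (br E i) = kr M (br D i) - e \<longrightarrow> kc (br E i) \<ge> kc (br D i))" for i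
    using branch_a[OF br_down[OF D] br_down[OF E] hi] ok eM e0 by blast
  have Bb: "kr M (br E i0) \<ge> kr M (br D i0) + e \<and> (kr M (br E i0) = kr M (br D i0) + e \<longrightarrow> kc (br E i0) > kc (br D i0))"
    using branch_b[OF br_down[OF D] br_down[OF E] hi w] ok eM e0 by blast
  have gen: "pot M D < pot M E"
    if o: "i0 = p" "q \<noteq> p" and pq: "\<forall>x. x = p \<or> x = q" for p q
  proof -
    have Ap: "kr M (br E q) \<ge> kr M (br D q) - e" "kr M (br E q) = kr M (br D q) - e \<Longrightarrow> kc (br E q) \<ge> kc (br D q)"
      using A[of q] by auto
    have Bp: "kr M (br E p) \<ge> kr M (br D p) + e" "kr M (br E p) = kr M (br D p) + e \<Longrightarrow> kc (br E p) > kc (br D p)"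
      using Bb o by auto
    have pd: "pot M D = (kr M (br D p) + kr M (br D q), kc (br D p) + kc (br D q))"
      "pot M E = (kr M (br E p) + kr M (br E q), kc (br E p) + kc (br E q))"
    proof -
      have "(p = One \<and> q = Two) \<or> (p = Two \<and> q = One)" using o(2) by (cases p; cases q) auto
      then show "pot M D = (kr M (br D p) + kr M (br D q), kc (br D p) + kc (br D q))"
          "pot M E = (kr M (br E p) + kr M (br E q), kc (br E p) + kc (br E q))"
        unfolding pot_def by (auto simp: add.commute)
    qed
    show ?thesis
    proof (cases "kr M (br E p) + kr M (br E q) = kr M (br D p) + kr M (br D q)")
      case True
      then have "kr M (br E q) = kr M (br D q) - e" "kr M (br E p) = kr M (br D p) + e"
        using Ap(1) Bp(1) by linarith+
      then have "kc (br E q) \<ge> kc (br D q)" "kc (br E p) > kc (br D p)" using Ap(2) Bp(2) by auto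
      then show ?thesis unfolding pd less_prod_def using True by simp
    next
      case False
      then have "kr M (br D p) + kr M (br D q) < kr M (br E p) + kr M (br E q)" using Ap(1) Bp(1) by linarith
      then show ?thesis unfolding pd less_prod_def by simp
    qed
  qed
  show ?thesis
  proof (cases i0)
    case One
    show ?thesis by (rule gen[of One Two]) (use One in \<open>auto, case_tac x, auto\<close>)
  next
    case Two
    show ?thesis by (rule gen[of Two One]) (use Two in \<open>auto, case_tac x, auto\<close>)
  qed
qed


definition close :: "real \<Rightarrow> bipath set \<Rightarrow> bipath set \<Rightarrow> bool" where
  "close e D E \<longleftrightarrow> (\<forall>b. shift e b \<in> E \<longrightarrow> b \<in> D) \<and> (\<forall>b. shift e b \<in> D \<longrightarrow> b \<in> E)"

lemma close_sym: "close e D E = close e E D"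
  unfolding close_def by blast

lemma bp_le_shift_self: "0 \<le> d \<Longrightarrow> bp_le b (shift d b)"
  by (cases b) auto

lemma summand_hom:
  assumes dV: "decomp sV V J UV IV" and dW: "decomp sW W K UW IW"
    and j: "j \<in> BL J IV" and k: "k \<in> BL K IW"
    and H: "\<forall>b. shift e b \<in> IW k \<longrightarrow> b \<in> IV j"
  shows "is_hom sV sW (UV j, snd V) (pshift e (UW k, snd W))
     (\<lambda>b x. sW (phiD sV V UV IV j b x) (snd W NegInf (shift e b) (genD sW W UW IW k)))"
proof -
  interpret A: decomp sV V J UV IV by (rule dV)
  interpret B: decomp sW W K UW IW by (rule dW)
  have jJ: "j \<in> J" using j A.BJ_J by blast
  have kK: "k \<in> K" using k B.BJ_J by blast
  let ?w = "\<lambda>b. snd W NegInf (shift e b) (genD sW W UW IW k)"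
  let ?f = "\<lambda>b x. sW (phiD sV V UV IV j b x) (?w b)"
  have win: "?w b \<in> UW k (shift e b)" for b using B.gen_b_in[OF k] .
  have L: "lin_on sV sW (UV j b) (UW k (shift e b)) (?f b)" for b
    unfolding lin_on_def
  proof (intro conjI ballI allI)
    show "?f b ` UV j b \<subseteq> UW k (shift e b)"
      using B.subspace_scale[OF B.U_sub[OF kK] win] by blast
  next
    fix x y assume "x \<in> UV j b" "y \<in> UV j b"
    then show "?f b (x + y) = ?f b x + ?f b y"
      using A.phi_add[OF jJ] by (simp add: B.scale_left_distrib)
  next
    fix c x assume "x \<in> UV j b"
    then show "?f b (sV c x) = sW c (?f b x)"
      using A.phi_scale[OF jJ] by simp
  qed
  have N: "snd W (shift e b) (shift e b') (?f b x) = ?f b' (snd V b b' x)"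
    if bb: "bp_le b b'" and x: "x \<in> UV j b" for b b' x
  proof -
    have sbb: "bp_le (shift e b) (shift e b')" using bp_le_shift[OF bb] .
    have g0: "genD sW W UW IW k \<in> fst W NegInf" using B.gen_in[OF k] B.U_le[OF kK] by blast
    have wf: "?w b \<in> fst W (shift e b)" using win B.U_le[OF kK] by blast
    have "snd W (shift e b) (shift e b') (?f b x) = sW (phiD sV V UV IV j b x) (snd W (shift e b) (shift e b') (?w b))"
      using B.V_scale[OF sbb wf] .
    also have "snd W (shift e b) (shift e b') (?w b) = ?w b'"
      using B.V_comp[OF _ sbb g0] by simp
    finally have lhs: "snd W (shift e b) (shift e b') (?f b x) = sW (phiD sV V UV IV j b x) (?w b')" .
    have rhs: "?f b' (snd V b b' x) = sW (if b \<in> IV j \<and> b' \<in> IV j then phiD sV V UV IV j b x else 0) (?w b')"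
      using A.phi_nat[OF jJ bb x] by simp
    show ?thesis
    proof (cases "b \<in> IV j \<and> b' \<in> IV j")
      case True then show ?thesis using lhs rhs by auto
    next
      case False
      show ?thesis
      proof (cases "b \<in> IV j")
        case True
        then have "b' \<notin> IV j" using False by blast
        then have "shift e b' \<notin> IW k" using H by blast
        then have "?w b' = 0" using B.gen_b_zero[OF k] by blast
        then show ?thesis using lhs rhs by simp
      next
        case nb: False
        have "phiD sV V UV IV j b x = 0" using A.phi_out[OF jJ nb x] .
        then show ?thesis using lhs rhs nb by simp
      qed
    qed
  qed
  show ?thesis unfolding is_hom_def pshift_def using L N by simp
qed

lemma summand_comp:
  assumes dV: "decomp sV V J UV IV" and dW: "decomp sW W K UW IW"
    and j: "j \<in> BL J IV" and k: "k \<in> BL K IW" and e0: "0 \<le> e"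
    and H2: "\<forall>b. shift e b \<in> IV j \<longrightarrow> b \<in> IW k" and x: "x \<in> UV j b"
  shows "sV (phiD sW W UW IW k (shift e b) (sW (phiD sV V UV IV j b x) (snd W NegInf (shift e b) (genD sW W UW IW k))))
           (snd V NegInf (shift e (shift e b)) (genD sV V UV IV j)) = snd V b (shift (2*e) b) x"
proof -
  interpret A: decomp sV V J UV IV by (rule dV)
  interpret B: decomp sW W K UW IW by (rule dW)
  have jJ: "j \<in> J" using j A.BJ_J by blast
  have kK: "k \<in> K" using k B.BJ_J by blast
  let ?c = "phiD sV V UV IV j b x"
  let ?g = "genD sV V UV IV j"
  have p: "phiD sW W UW IW k (shift e b) (sW ?c (snd W NegInf (shift e b) (genD sW W UW IW k)))
      = ?c * (if shift e b \<in> IW k then 1 else 0)"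
    using B.phi_scale[OF kK B.gen_b_in[OF k]] B.phi_gen_b[OF k] by simp
  have le2: "bp_le b (shift (2*e) b)" using bp_le_shift_self e0 by simp
  have s2: "shift e (shift e b) = shift (2*e) b" using shift_2e by simp
  show ?thesis
  proof (cases "b \<in> IV j")
    case False
    have "x = 0" using A.U_out[OF jJ False x] .
    then show ?thesis using A.phi_zero[OF jJ] A.V_zero[OF le2] B.phi_zero[OF kK] by simp
  next
    case True
    have xr: "x = sV ?c (snd V NegInf b ?g)" using A.U_repr[OF j True x] .
    have gf: "snd V NegInf b ?g \<in> fst V b" using A.gen_b_in[OF j] A.U_le[OF jJ] by blast
    have g0: "?g \<in> fst V NegInf" using A.gen_in[OF j] A.U_le[OF jJ] by blast
    have "snd V b (shift (2*e) b) x = sV ?c (snd V b (shift (2*e) b) (snd V NegInf b ?g))"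
      using A.V_scale[OF le2 gf] xr by metis
    also have "\<dots> = sV ?c (snd V NegInf (shift (2*e) b) ?g)"
      using A.V_comp[OF _ le2 g0] by simp
    finally have rhs: "snd V b (shift (2*e) b) x = sV ?c (snd V NegInf (shift (2*e) b) ?g)" .
    show ?thesis
    proof (cases "shift e b \<in> IW k")
      case True
      then show ?thesis using p rhs s2 by simp
    next
      case False
      then have "shift (2*e) b \<notin> IV j" using H2 s2 by metis
      then have "snd V NegInf (shift (2*e) b) ?g = 0" using A.gen_b_zero[OF j] by blast
      then show ?thesis using p rhs s2 False by simp
    qed
  qed
qed

lemma summand_interleaved:
  assumes dV: "decomp sV V J UV IV" and dW: "decomp sW W K UW IW"
    and j: "j \<in> BL J IV" and k: "k \<in> BL K IW" and e0: "0 \<le> e"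
    and cl: "close e (IV j) (IW k)"
  shows "interleaved sV sW e (UV j, snd V) (UW k, snd W)"
proof -
  have H1: "\<forall>b. shift e b \<in> IW k \<longrightarrow> b \<in> IV j" and H2: "\<forall>b. shift e b \<in> IV j \<longrightarrow> b \<in> IW k"
    using cl unfolding close_def by auto
  let ?a = "\<lambda>b x. sW (phiD sV V UV IV j b x) (snd W NegInf (shift e b) (genD sW W UW IW k))"
  let ?b = "\<lambda>b x. sV (phiD sW W UW IW k b x) (snd V NegInf (shift e b) (genD sV V UV IV j))"
  have ha: "is_hom sV sW (UV j, snd V) (pshift e (UW k, snd W)) ?a"
    using summand_hom[OF dV dW j k H1] .
  have hb: "is_hom sW sV (UW k, snd W) (pshift e (UV j, snd V)) ?b"
    using summand_hom[OF dW dV k j H2] .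
  have ca: "\<forall>b. \<forall>x\<in>fst (UV j, snd V) b. hshift e ?b b (?a b x) = transl (2 * e) (UV j, snd V) b x"
    using summand_comp[OF dV dW j k e0 H2] by (simp add: hshift_def transl_def)
  have cb: "\<forall>b. \<forall>x\<in>fst (UW k, snd W) b. hshift e ?a b (?b b x) = transl (2 * e) (UW k, snd W) b x"
    using summand_comp[OF dW dV k j e0 H1] by (simp add: hshift_def transl_def)
  show ?thesis unfolding interleaved_def using ha hb ca cb by blast
qed

lemma summand_sig:
  assumes d: "decomp s V J U I" and j: "j \<in> BL J I"
  shows "\<not> shift_trivial t (U j, snd V)"
proof -
  interpret A: decomp s V J U I by (rule d)
  have g: "genD s V U I j \<in> U j NegInf" using A.gen_in[OF j] .
  have "transl t (U j, snd V) NegInf (genD s V U I j) = genD s V U I j"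
    unfolding transl_def using A.V_id g A.U_le[OF A.BJ_J[OF j]] by auto
  then show ?thesis unfolding shift_trivial_def using g A.gen_nz[OF j] by force
qed

lemma hom_coeff:
  assumes dV: "decomp sV V J UV IV" and dW: "decomp sW W K UW IW"
    and ha: "is_hom sV sW (modL V J UV IV) (pshift e (modL W K UW IW)) \<alpha>"
    and j: "j \<in> BL J IV"
    and eq: "\<alpha> NegInf (genD sV V UV IV j) = (\<Sum>k\<in>BL K IW. sW (P k) (genD sW W UW IW k))"
    and k: "k \<in> BL K IW" and P: "P k \<noteq> 0"
  shows "\<forall>b. shift e b \<in> IW k \<longrightarrow> b \<in> IV j"
proof (intro allI impI, rule ccontr)
  interpret A: decomp sV V J UV IV by (rule dV)
  interpret B: decomp sW W K UW IW by (rule dW)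
  fix b assume sb: "shift e b \<in> IW k" and nb: "b \<notin> IV j"
  let ?g = "genD sV V UV IV j"
  let ?h = "genD sW W UW IW"
  have z: "snd V NegInf b ?g = 0" using A.gen_b_zero[OF j] nb by blast
  have gin: "?g \<in> sum_set (BL J IV) UV NegInf"
    unfolding sum_set_def using A.gen_in[OF j] j
    by (intro CollectI exI[of _ "{j}"] exI[of _ "\<lambda>_. ?g"]) auto
  have nat: "\<forall>b b'. bp_le b b' \<longrightarrow> (\<forall>x\<in>sum_set (BL J IV) UV b. snd W (shift e b) (shift e b') (\<alpha> b x) = \<alpha> b' (snd V b b' x))"
    using ha unfolding is_hom_def modL_def pshift_def by simp
  have lin: "lin_on sV sW (sum_set (BL J IV) UV b) (sum_set (BL K IW) UW (shift e b)) (\<alpha> b)"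
    using ha unfolding is_hom_def modL_def pshift_def by simp
  have "snd W NegInf (shift e b) (\<alpha> NegInf ?g) = \<alpha> b (snd V NegInf b ?g)"
    using nat[rule_format, of NegInf b, OF _ gin] by simp
  also have "\<dots> = 0" using z lin_on_0[OF lin A.sumset_0] by simp
  finally have "snd W NegInf (shift e b) (\<Sum>k\<in>BL K IW. sW (P k) (?h k)) = 0" using eq by simp
  moreover have "snd W NegInf (shift e b) (\<Sum>k\<in>BL K IW. sW (P k) (?h k))
      = (\<Sum>k\<in>BL K IW. sW (P k) (snd W NegInf (shift e b) (?h k)))"
  proof -
    have hin: "\<forall>k\<in>BL K IW. ?h k \<in> fst W NegInf" using B.gen_in B.U_le B.BJ_J by blast
    have "snd W NegInf (shift e b) (\<Sum>k\<in>BL K IW. sW (P k) (?h k))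
        = (\<Sum>k\<in>BL K IW. snd W NegInf (shift e b) (sW (P k) (?h k)))"
      using B.V_sum[OF _ B.finite_BJ] hin B.subspace_scale[OF B.V_sub] by simp
    also have "\<dots> = (\<Sum>k\<in>BL K IW. sW (P k) (snd W NegInf (shift e b) (?h k)))"
      using B.V_scale hin by simp
    finally show ?thesis .
  qed
  ultimately have s0: "(\<Sum>k\<in>BL K IW. sW (P k) (snd W NegInf (shift e b) (?h k))) = 0" by simp
  have "\<forall>k'\<in>BL K IW. sW (P k') (snd W NegInf (shift e b) (?h k')) = 0"
    apply (rule B.indep_zero[of "BL K IW" _ "shift e b"])
    using B.BJ_J B.finite_BJ s0 B.subspace_scale[OF B.U_sub[OF B.BJ_J] B.gen_b_in] by auto
  then have "sW (P k) (snd W NegInf (shift e b) (?h k)) = 0" using k by blast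
  then have "snd W NegInf (shift e b) (?h k) = 0" using P by simp
  then show False using B.gen_b_zero[OF k] sb by blast
qed


context decomp begin

lemma gen_sumset: "j \<in> BJ \<Longrightarrow> gen j \<in> sum_set BJ U NegInf"
  unfolding sum_set_def using gen_in
  by (intro CollectI exI[of _ "{j}"] exI[of _ "\<lambda>_. gen j"]) auto

lemma sumset0_add: "x \<in> sum_set BJ U NegInf \<Longrightarrow> y \<in> sum_set BJ U NegInf \<Longrightarrow> x + y \<in> sum_set BJ U NegInf"
proof -
  assume "x \<in> sum_set BJ U NegInf" "y \<in> sum_set BJ U NegInf"
  then obtain c d where "x = (\<Sum>j\<in>BJ. c j *s gen j)" "y = (\<Sum>j\<in>BJ. d j *s gen j)" using repr by metis
  then have "x + y = (\<Sum>j\<in>BJ. (c j + d j) *s gen j)" by (simp add: sum.distrib scale_left_distrib)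
  then show ?thesis using comb_in by simp
qed

lemma sumset0_scale: "x \<in> sum_set BJ U NegInf \<Longrightarrow> a *s x \<in> sum_set BJ U NegInf"
proof -
  assume "x \<in> sum_set BJ U NegInf"
  then obtain c where "x = (\<Sum>j\<in>BJ. c j *s gen j)" using repr by metis
  then have "a *s x = (\<Sum>j\<in>BJ. (a * c j) *s gen j)" by (simp add: scale_sum_right)
  then show ?thesis using comb_in by simp
qed

lemma comb_swap: "finite F \<Longrightarrow> finite G \<Longrightarrow>
  (\<Sum>j\<in>F. c j *s (\<Sum>k\<in>G. P j k *s h k)) = (\<Sum>k\<in>G. (\<Sum>j\<in>F. c j * P j k) *s h k)"
proof -
  assume "finite F" "finite G"
  have "(\<Sum>j\<in>F. c j *s (\<Sum>k\<in>G. P j k *s h k)) = (\<Sum>j\<in>F. \<Sum>k\<in>G. (c j * P j k) *s h k)"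
    by (simp add: scale_sum_right)
  also have "\<dots> = (\<Sum>k\<in>G. \<Sum>j\<in>F. (c j * P j k) *s h k)" by (rule sum.swap)
  also have "\<dots> = (\<Sum>k\<in>G. (\<Sum>j\<in>F. c j * P j k) *s h k)" by (simp add: scale_sum_left)
  finally show ?thesis .
qed

end

lemma lin_comb:
  assumes vW: "vector_space sW" and lin: "lin_on sV sW A C f" and A0: "0 \<in> A"
    and Aadd: "\<forall>x\<in>A. \<forall>y\<in>A. x + y \<in> A" and Asc: "\<forall>c. \<forall>x\<in>A. sV c x \<in> A"
    and fF: "finite F" and fG: "finite G" and g: "\<forall>j\<in>F. g j \<in> A"
    and fg: "\<forall>j\<in>F. f (g j) = (\<Sum>k\<in>G. sW (P j k) (h k))"
  shows "f (\<Sum>j\<in>F. sV (c j) (g j)) = (\<Sum>k\<in>G. sW (\<Sum>j\<in>F. c j * P j k) (h k))"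
proof -
  interpret W: vector_space sW by (rule vW)
  have "f (\<Sum>j\<in>F. sV (c j) (g j)) = (\<Sum>j\<in>F. f (sV (c j) (g j)))"
    by (rule lin_on_sum[OF lin A0 Aadd fF]) (use g Asc in auto)
  also have "\<dots> = (\<Sum>j\<in>F. sW (c j) (\<Sum>k\<in>G. sW (P j k) (h k)))"
    by (rule sum.cong) (use lin g fg in \<open>auto simp: lin_on_def\<close>)
  also have "\<dots> = (\<Sum>j\<in>F. \<Sum>k\<in>G. sW (c j * P j k) (h k))"
    by (simp add: W.scale_sum_right)
  also have "\<dots> = (\<Sum>k\<in>G. \<Sum>j\<in>F. sW (c j * P j k) (h k))" by (rule sum.swap)
  also have "\<dots> = (\<Sum>k\<in>G. sW (\<Sum>j\<in>F. c j * P j k) (h k))" by (simp add: W.scale_sum_left)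
  finally show ?thesis .
qed

definition krr :: "real set \<Rightarrow> real" where "krr X = (if X \<noteq> {} \<and> X \<noteq> UNIV then Sup X else 0)"
definition bd :: "bipath set \<Rightarrow> real" where "bd D = \<bar>krr (br D One)\<bar> + \<bar>krr (br D Two)\<bar>"

lemma okb_bd: "bd D + e < M \<Longrightarrow> okb M e (br D i)"
proof -
  assume a: "bd D + e < M"
  have "\<bar>krr (br D i)\<bar> \<le> bd D" by (cases i) (auto simp: bd_def)
  then show ?thesis using a unfolding okb_def krr_def by (auto split: if_splits)
qed

lemma interleaved_sym: "interleaved sV sW e X Y \<Longrightarrow> interleaved sW sV e Y X"
  unfolding interleaved_def by blast


lemma hall_dir:
  assumes dV: "decomp sV V J UV IV" and dW: "decomp sW W K UW IW" and e0: "0 \<le> e"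
    and il: "interleaved sV sW e (modL V J UV IV) (modL W K UW IW)"
  shows "\<forall>X\<subseteq>BL J IV. card X \<le> card {k\<in>BL K IW. \<exists>j\<in>X. close e (IV j) (IW k)}"
proof (intro allI impI)
  interpret A: decomp sV V J UV IV by (rule dV)
  interpret B: decomp sW W K UW IW by (rule dW)
  fix X assume XB: "X \<subseteq> BL J IV"
  define BJ where "BJ = BL J IV"
  define BK where "BK = BL K IW"
  define g where "g = genD sV V UV IV"
  define h where "h = genD sW W UW IW"
  obtain \<alpha> \<beta> where h\<alpha>: "is_hom sV sW (modL V J UV IV) (pshift e (modL W K UW IW)) \<alpha>"
    and h\<beta>: "is_hom sW sV (modL W K UW IW) (pshift e (modL V J UV IV)) \<beta>"
    and cV: "\<forall>b. \<forall>x\<in>fst (modL V J UV IV) b. hshift e \<beta> b (\<alpha> b x) = transl (2 * e) (modL V J UV IV) b x"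
    using il unfolding interleaved_def by blast
  have fBJ: "finite BJ" unfolding BJ_def using A.finite_BJ .
  have fBK: "finite BK" unfolding BK_def using B.finite_BJ .
  have "\<forall>b. lin_on sV sW (sum_set BJ UV b) (sum_set BK UW (shift e b)) (\<alpha> b)"
    using h\<alpha> unfolding is_hom_def modL_def pshift_def BJ_def BK_def by simp
  then have \<alpha>lin: "lin_on sV sW (sum_set BJ UV NegInf) (sum_set BK UW NegInf) (\<alpha> NegInf)"
    by (metis shift_Neg)
  have "\<forall>b. lin_on sW sV (sum_set BK UW b) (sum_set BJ UV (shift e b)) (\<beta> b)"
    using h\<beta> unfolding is_hom_def modL_def pshift_def BJ_def BK_def by simp
  then have \<beta>lin: "lin_on sW sV (sum_set BK UW NegInf) (sum_set BJ UV NegInf) (\<beta> NegInf)"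
    by (metis shift_Neg)
  have \<beta>\<alpha>: "\<beta> NegInf (\<alpha> NegInf x) = x" if "x \<in> sum_set BJ UV NegInf" for x
  proof -
    have "hshift e \<beta> NegInf (\<alpha> NegInf x) = transl (2 * e) (modL V J UV IV) NegInf x"
      using cV that unfolding modL_def BJ_def by simp
    then show ?thesis using A.V_id A.sumset_le that unfolding hshift_def transl_def modL_def BJ_def
      by auto
  qed
  have "\<forall>j\<in>BJ. \<exists>d. \<alpha> NegInf (g j) = (\<Sum>k\<in>BK. sW (d k) (h k))"
  proof
    fix j assume j: "j \<in> BJ"
    have "\<alpha> NegInf (g j) \<in> sum_set BK UW NegInf"
      using \<alpha>lin A.gen_sumset j unfolding lin_on_def BJ_def g_def by blast
    then show "\<exists>d. \<alpha> NegInf (g j) = (\<Sum>k\<in>BK. sW (d k) (h k))"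
      using B.repr unfolding BK_def h_def by blast
  qed
  then obtain P where P: "\<forall>j\<in>BJ. \<alpha> NegInf (g j) = (\<Sum>k\<in>BK. sW (P j k) (h k))"
    by (metis bchoice)
  have "\<forall>k\<in>BK. \<exists>d. \<beta> NegInf (h k) = (\<Sum>j\<in>BJ. sV (d j) (g j))"
  proof
    fix k assume k: "k \<in> BK"
    have "\<beta> NegInf (h k) \<in> sum_set BJ UV NegInf"
      using \<beta>lin B.gen_sumset k unfolding lin_on_def BK_def h_def by blast
    then show "\<exists>d. \<beta> NegInf (h k) = (\<Sum>j\<in>BJ. sV (d j) (g j))"
      using A.repr unfolding BJ_def g_def by blast
  qed
  then obtain Q where Q: "\<forall>k\<in>BK. \<beta> NegInf (h k) = (\<Sum>j\<in>BJ. sV (Q k j) (g j))"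
    by (metis bchoice)
  have PH: "\<forall>b. shift e b \<in> IW k \<longrightarrow> b \<in> IV j" if "j \<in> BJ" "k \<in> BK" "P j k \<noteq> 0" for j k
  proof -
    have j': "j \<in> BL J IV" using that(1) unfolding BJ_def .
    have k': "k \<in> BL K IW" using that(2) unfolding BK_def .
    have eq: "\<alpha> NegInf (genD sV V UV IV j) = (\<Sum>k\<in>BL K IW. sW (P j k) (genD sW W UW IW k))"
      using P that(1) unfolding BK_def g_def h_def by blast
    show ?thesis by (rule hom_coeff[OF dV dW h\<alpha> j' eq k' that(3)])
  qed
  have QH: "\<forall>b. shift e b \<in> IV j \<longrightarrow> b \<in> IW k" if "j \<in> BJ" "k \<in> BK" "Q k j \<noteq> 0" for j k
  proof -
    have j': "j \<in> BL J IV" using that(1) unfolding BJ_def .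
    have k': "k \<in> BL K IW" using that(2) unfolding BK_def .
    have eq: "\<beta> NegInf (genD sW W UW IW k) = (\<Sum>j\<in>BL J IV. sV (Q k j) (genD sV V UV IV j))"
      using Q that(2) unfolding BJ_def g_def h_def by blast
    show ?thesis by (rule hom_coeff[OF dW dV h\<beta> k' eq j' that(3)])
  qed
  define M where "M = e + 1 + (\<Sum>j\<in>BJ. bd (IV j)) + (\<Sum>k\<in>BK. bd (IW k))"
  have bd0: "bd D \<ge> 0" for D unfolding bd_def by simp
  have s1: "(\<Sum>j\<in>BJ. bd (IV j)) \<ge> 0" by (rule sum_nonneg) (simp add: bd0)
  have s2: "(\<Sum>k\<in>BK. bd (IW k)) \<ge> 0" by (rule sum_nonneg) (simp add: bd0)
  have eM: "e < M" unfolding M_def using s1 s2 by linarith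
  have okV: "okb M e (br (IV j) i)" if "j \<in> BJ" for j i
  proof (rule okb_bd)
    have "bd (IV j) \<le> (\<Sum>j\<in>BJ. bd (IV j))" by (rule member_le_sum[OF that _ fBJ]) (simp add: bd0)
    then show "bd (IV j) + e < M" unfolding M_def using s2 by linarith
  qed
  have okW: "okb M e (br (IW k) i)" if "k \<in> BK" for k i
  proof (rule okb_bd)
    have "bd (IW k) \<le> (\<Sum>k\<in>BK. bd (IW k))" by (rule member_le_sum[OF that _ fBK]) (simp add: bd0)
    then show "bd (IW k) + e < M" unfolding M_def using s1 by linarith
  qed
  have LV: "IV j \<in> Lset" if "j \<in> BJ" for j using that A.BJ_L unfolding BJ_def by blast
  have LW: "IW k \<in> Lset" if "k \<in> BK" for k using that B.BJ_L unfolding BK_def by blast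
  have sub0: "0 \<in> sum_set BJ UV NegInf" "\<forall>x\<in>sum_set BJ UV NegInf. \<forall>y\<in>sum_set BJ UV NegInf. x + y \<in> sum_set BJ UV NegInf"
     "\<forall>c. \<forall>x\<in>sum_set BJ UV NegInf. sV c x \<in> sum_set BJ UV NegInf"
    unfolding BJ_def using A.sumset_0 apply blast
    unfolding BJ_def using A.sumset0_add apply blast
    unfolding BJ_def using A.sumset0_scale by blast
  have subW0: "0 \<in> sum_set BK UW NegInf" "\<forall>x\<in>sum_set BK UW NegInf. \<forall>y\<in>sum_set BK UW NegInf. x + y \<in> sum_set BK UW NegInf"
     "\<forall>c. \<forall>x\<in>sum_set BK UW NegInf. sW c x \<in> sum_set BK UW NegInf"
    unfolding BK_def using B.sumset_0 apply blast
    unfolding BK_def using B.sumset0_add apply blast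
    unfolding BK_def using B.sumset0_scale by blast
  define N where "N = {k\<in>BK. \<exists>j\<in>X. close e (IV j) (IW k)}"
  have XB': "X \<subseteq> BJ" using XB unfolding BJ_def .
  have NB: "N \<subseteq> BK" unfolding N_def by auto
  have fN: "finite N" using NB fBK finite_subset by blast
  have fX: "finite X" using XB' fBJ finite_subset by blast
  have rank: "\<forall>j\<in>BJ. c j = 0"
    if c0: "\<forall>j\<in>BJ - X. c j = 0" and hN: "\<forall>k\<in>N. (\<Sum>j\<in>BJ. c j * P j k) = 0" for c
  proof (rule ccontr)
    assume "\<not> (\<forall>j\<in>BJ. c j = 0)"
    define a where "a k = (\<Sum>j\<in>BJ. c j * P j k)" for k
    define x where "x = (\<Sum>j\<in>BJ. sV (c j) (g j))"
    have xin: "x \<in> sum_set BJ UV NegInf" unfolding x_def BJ_def g_def using A.comb_in .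
    have ax: "\<alpha> NegInf x = (\<Sum>k\<in>BK. sW (a k) (h k))"
      unfolding x_def a_def
      by (rule lin_comb[OF B.vector_space_axioms \<alpha>lin sub0 fBJ fBK])
         (use P A.gen_sumset in \<open>auto simp: BJ_def g_def\<close>)
    have bx: "\<beta> NegInf (\<Sum>k\<in>BK. sW (a k) (h k)) = (\<Sum>j\<in>BJ. sV (\<Sum>k\<in>BK. a k * Q k j) (g j))"
      by (rule lin_comb[OF A.vector_space_axioms \<beta>lin subW0 fBK fBJ])
         (use Q B.gen_sumset in \<open>auto simp: BK_def h_def\<close>)
    have "x = (\<Sum>j\<in>BJ. sV (\<Sum>k\<in>BK. a k * Q k j) (g j))"
      using \<beta>\<alpha>[OF xin] ax bx by simp
    then have cq: "\<forall>j\<in>BJ. c j = (\<Sum>k\<in>BK. a k * Q k j)"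
      using A.gen_unique[OF _ fBJ[unfolded BJ_def], of c "\<lambda>j. \<Sum>k\<in>BK. a k * Q k j"]
      unfolding x_def BJ_def g_def by blast
    define S where "S = {j\<in>BJ. c j \<noteq> 0}"
    have SX: "S \<subseteq> X" using c0 unfolding S_def by auto
    have fS: "finite S" using fBJ unfolding S_def by auto
    have Sne: "S \<noteq> {}" using \<open>\<not> (\<forall>j\<in>BJ. c j = 0)\<close> unfolding S_def by auto
    define m where "m = Max ((\<lambda>j. pot M (IV j)) ` S)"
    have "m \<in> (\<lambda>j. pot M (IV j)) ` S" unfolding m_def using fS Sne by (intro Max_in) auto
    then obtain j0 where j0: "j0 \<in> S" "pot M (IV j0) = m" by blast
    have mx: "pot M (IV j) \<le> m" if "j \<in> S" for j unfolding m_def using fS that by (intro Max_ge) auto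
    have j0B: "j0 \<in> BJ" "c j0 \<noteq> 0" using j0 unfolding S_def by auto
    then have "(\<Sum>k\<in>BK. a k * Q k j0) \<noteq> 0" using cq by auto
    then obtain k where k: "k \<in> BK" "a k * Q k j0 \<noteq> 0"
      by (rule sum.not_neutral_contains_not_neutral)
    then have "(\<Sum>j\<in>BJ. c j * P j k) \<noteq> 0" unfolding a_def by auto
    then obtain j' where j': "j' \<in> BJ" "c j' * P j' k \<noteq> 0"
      by (rule sum.not_neutral_contains_not_neutral)
    have j'S: "j' \<in> S" using j' unfolding S_def by auto
    have kN: "k \<notin> N" using hN k unfolding a_def by auto
    have j0X: "j0 \<in> X" "j' \<in> X" using j0(1) j'S SX by auto
    have nc0: "\<not> close e (IV j0) (IW k)" using kN k j0X unfolding N_def by auto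
    have nc': "\<not> close e (IV j') (IW k)" using kN k j0X unfolding N_def by auto
    have q: "Q k j0 \<noteq> 0" using k by auto
    have p: "P j' k \<noteq> 0" using j' by auto
    have h1: "\<forall>b. shift e b \<in> IV j0 \<longrightarrow> b \<in> IW k" using QH[OF j0B(1) k(1) q] .
    then have n1: "\<not> (\<forall>b. shift e b \<in> IW k \<longrightarrow> b \<in> IV j0)" using nc0 unfolding close_def by blast
    have lt1: "pot M (IV j0) < pot M (IW k)"
      by (rule pot_lt[OF LV[OF j0B(1)] LW[OF k(1)] e0 eM _ h1 n1]) (use okV[OF j0B(1)] okW[OF k(1)] in blast)
    have h2: "\<forall>b. shift e b \<in> IW k \<longrightarrow> b \<in> IV j'" using PH[OF j'(1) k(1) p] .
    then have n2: "\<not> (\<forall>b. shift e b \<in> IV j' \<longrightarrow> b \<in> IW k)" using nc' unfolding close_def by blast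
    have lt2: "pot M (IW k) < pot M (IV j')"
      by (rule pot_lt[OF LW[OF k(1)] LV[OF j'(1)] e0 eM _ h2 n2]) (use okV[OF j'(1)] okW[OF k(1)] in blast)
    have "pot M (IV j') \<le> pot M (IV j0)" using mx[OF j'S] j0(2) by simp
    then show False using lt1 lt2 by simp
  qed
  define r where "r j = (\<Sum>k\<in>N. sW (P j k) (h k))" for j
  have hunique: "\<forall>k\<in>N. d k = 0" if "(\<Sum>k\<in>N. sW (d k) (h k)) = 0" for d
    using B.gen_unique0[of N d] NB fN that unfolding BK_def h_def by blast
  have key: "\<forall>j\<in>X. c j = 0" if "(\<Sum>j\<in>X. sW (c j) (r j)) = 0" for c
  proof -
    have "(\<Sum>j\<in>X. sW (c j) (r j)) = (\<Sum>k\<in>N. sW (\<Sum>j\<in>X. c j * P j k) (h k))"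
      unfolding r_def using B.comb_swap[OF fX fN] .
    then have z: "\<forall>k\<in>N. (\<Sum>j\<in>X. c j * P j k) = 0" using hunique that by simp
    define c' where "c' j = (if j \<in> X then c j else 0)" for j
    have "\<forall>k\<in>N. (\<Sum>j\<in>BJ. c' j * P j k) = 0"
    proof
      fix k assume "k \<in> N"
      have "(\<Sum>j\<in>BJ. c' j * P j k) = (\<Sum>j\<in>X. c' j * P j k)"
        by (rule sum.mono_neutral_right[OF fBJ XB']) (auto simp: c'_def)
      also have "\<dots> = (\<Sum>j\<in>X. c j * P j k)" by (rule sum.cong) (auto simp: c'_def)
      finally show "(\<Sum>j\<in>BJ. c' j * P j k) = 0" using z \<open>k \<in> N\<close> by simp
    qed
    then have "\<forall>j\<in>BJ. c' j = 0" using rank[of c'] unfolding c'_def by auto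
    then have cc: "\<forall>j\<in>BJ. (if j \<in> X then c j else 0) = 0" unfolding c'_def .
    show ?thesis
    proof
      fix j assume jX: "j \<in> X"
      then have "j \<in> BJ" using XB' by blast
      then show "c j = 0" using cc jX by force
    qed
  qed
  have inj: "inj_on r X"
  proof (rule inj_onI, rule ccontr)
    fix j1 j2 assume a: "j1 \<in> X" "j2 \<in> X" "r j1 = r j2" "j1 \<noteq> j2"
    define c where "c j = (if j = j1 then 1 else if j = j2 then -1 else (0::'a))" for j
    have "(\<Sum>j\<in>X. sW (c j) (r j)) = (\<Sum>j\<in>{j1, j2}. sW (c j) (r j))"
      by (rule sum.mono_neutral_right[OF fX]) (use a in \<open>auto simp: c_def\<close>)
    also have "\<dots> = 0" using a by (simp add: c_def)
    finally have "\<forall>j\<in>X. c j = 0" using key by blast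
    then have "c j1 = 0" using a(1) by blast
    then show False unfolding c_def by simp
  qed
  have indep: "B.independent (r ` X)"
  proof
    assume "B.dependent (r ` X)"
    then obtain t u where t: "finite t" "t \<subseteq> r ` X" "(\<Sum>v\<in>t. sW (u v) v) = 0" "\<exists>v\<in>t. u v \<noteq> 0"
      unfolding B.dependent_explicit by blast
    define F where "F = {j\<in>X. r j \<in> t}"
    have tF: "t = r ` F" using t(2) unfolding F_def by auto
    have injF: "inj_on r F" using inj unfolding F_def by (auto intro: inj_on_subset)
    define c where "c j = (if j \<in> F then u (r j) else 0)" for j
    have "(\<Sum>j\<in>X. sW (c j) (r j)) = (\<Sum>j\<in>F. sW (c j) (r j))"
      by (rule sum.mono_neutral_right[OF fX]) (auto simp: c_def F_def)
    also have "\<dots> = (\<Sum>j\<in>F. sW (u (r j)) (r j))" by (rule sum.cong) (auto simp: c_def)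
    also have "\<dots> = (\<Sum>v\<in>t. sW (u v) v)" using tF injF by (simp add: sum.reindex)
    finally have "\<forall>j\<in>X. c j = 0" using key t(3) by simp
    then have cz: "\<forall>j\<in>X. (if j \<in> F then u (r j) else 0) = 0" unfolding c_def .
    obtain v where v: "v \<in> t" "u v \<noteq> 0" using t(4) by blast
    then obtain j where j: "j \<in> F" "v = r j" using tF by blast
    then have "j \<in> X" unfolding F_def by blast
    then have "u (r j) = 0" using cz j(1) by force
    then show False using v j by simp
  qed
  have sp: "r ` X \<subseteq> B.span (h ` N)"
  proof
    fix v assume "v \<in> r ` X"
    then obtain j where "v = r j" by blast
    then have "v = (\<Sum>k\<in>N. sW (P j k) (h k))" unfolding r_def .
    then show "v \<in> B.span (h ` N)"
      apply simp apply (rule B.span_sum) apply (rule B.span_scale) apply (rule B.span_base) by auto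
  qed
  have "card (r ` X) \<le> card (h ` N)"
    using B.independent_span_bound[OF _ indep sp] fN by blast
  also have "\<dots> \<le> card N" using card_image_le fN by blast
  finally show "card X \<le> card {k\<in>BL K IW. \<exists>j\<in>X. close e (IV j) (IW k)}"
    using card_image[OF inj] unfolding N_def BK_def by simp
qed


theorem proposition4p15:
  fixes sV :: "'k::field \<Rightarrow> 'v::ab_group_add \<Rightarrow> 'v"
    and sW :: "'k \<Rightarrow> 'w::ab_group_add \<Rightarrow> 'w"
    and V :: "'v pmod" and W :: "'w pmod"
    and J :: "'a set" and UV :: "'a \<Rightarrow> bipath \<Rightarrow> 'v set" and IV :: "'a \<Rightarrow> bipath set"
    and K :: "'b set" and UW :: "'b \<Rightarrow> bipath \<Rightarrow> 'w set" and IW :: "'b \<Rightarrow> bipath set"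
    and e :: real
  assumes "vector_space sV" and "vector_space sW"
    and "is_pfd sV V" and "is_pfd sW W"
    and "interval_decomp sV V J UV IV" and "interval_decomp sW W K UW IW"
    and "0 \<le> e"
  shows "Bsig (2 * e) V (BL J IV) UV = BL J IV \<and> Bsig (2 * e) W (BL K IW) UW = BL K IW
    \<and> (interleaved sV sW e (modL V J UV IV) (modL W K UW IW) \<longrightarrow>
        (\<forall>X. X \<subseteq> Bsig (2 * e) V (BL J IV) UV \<and> finite X \<longrightarrow>
           (let NX = {k \<in> BL K IW. \<exists>j\<in>X. interleaved sV sW e (UV j, snd V) (UW k, snd W)}
            in infinite NX \<or> card X \<le> card NX))
      \<and> (\<forall>Y. Y \<subseteq> Bsig (2 * e) W (BL K IW) UW \<and> finite Y \<longrightarrow>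
           (let NY = {j \<in> BL J IV. \<exists>k\<in>Y. interleaved sV sW e (UV j, snd V) (UW k, snd W)}
            in infinite NY \<or> card Y \<le> card NY))
      \<and> (\<exists>J' K' \<sigma>. J' \<subseteq> BL J IV \<and> K' \<subseteq> BL K IW \<and> bij_betw \<sigma> J' K'
           \<and> (\<forall>j \<in> BL J IV - J'. shift_trivial (2 * e) (UV j, snd V))
           \<and> (\<forall>k \<in> BL K IW - K'. shift_trivial (2 * e) (UW k, snd W))
           \<and> (\<forall>j\<in>J'. interleaved sV sW e (UV j, snd V) (UW (\<sigma> j), snd W))))"
proof -
  have dV: "decomp sV V J UV IV"
    by (intro decomp.intro decomp_axioms.intro) (use assms in auto)
  have dW: "decomp sW W K UW IW"
    by (intro decomp.intro decomp_axioms.intro) (use assms in auto)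
  have e0: "0 \<le> e" using assms by simp
  have fJ: "finite (BL J IV)" using decomp.finite_BJ[OF dV] .
  have fK: "finite (BL K IW)" using decomp.finite_BJ[OF dW] .
  have sV: "Bsig (2 * e) V (BL J IV) UV = BL J IV"
    unfolding Bsig_def using summand_sig[OF dV] by auto
  have sW: "Bsig (2 * e) W (BL K IW) UW = BL K IW"
    unfolding Bsig_def using summand_sig[OF dW] by auto
  have main: "(\<forall>X. X \<subseteq> Bsig (2 * e) V (BL J IV) UV \<and> finite X \<longrightarrow>
           (let NX = {k \<in> BL K IW. \<exists>j\<in>X. interleaved sV sW e (UV j, snd V) (UW k, snd W)}
            in infinite NX \<or> card X \<le> card NX))
      \<and> (\<forall>Y. Y \<subseteq> Bsig (2 * e) W (BL K IW) UW \<and> finite Y \<longrightarrow>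
           (let NY = {j \<in> BL J IV. \<exists>k\<in>Y. interleaved sV sW e (UV j, snd V) (UW k, snd W)}
            in infinite NY \<or> card Y \<le> card NY))
      \<and> (\<exists>J' K' \<sigma>. J' \<subseteq> BL J IV \<and> K' \<subseteq> BL K IW \<and> bij_betw \<sigma> J' K'
           \<and> (\<forall>j \<in> BL J IV - J'. shift_trivial (2 * e) (UV j, snd V))
           \<and> (\<forall>k \<in> BL K IW - K'. shift_trivial (2 * e) (UW k, snd W))
           \<and> (\<forall>j\<in>J'. interleaved sV sW e (UV j, snd V) (UW (\<sigma> j), snd W)))"
    if il: "interleaved sV sW e (modL V J UV IV) (modL W K UW IW)"
  proof -
    have il': "interleaved sW sV e (modL W K UW IW) (modL V J UV IV)"
      using interleaved_sym[OF il] .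
    have h1: "\<forall>X\<subseteq>BL J IV. card X \<le> card {k\<in>BL K IW. \<exists>j\<in>X. close e (IV j) (IW k)}"
      using hall_dir[OF dV dW e0 il] .
    have h2: "\<forall>Y\<subseteq>BL K IW. card Y \<le> card {j\<in>BL J IV. \<exists>k\<in>Y. close e (IW k) (IV j)}"
      using hall_dir[OF dW dV e0 il'] .
    obtain f where f: "inj_on f (BL J IV)" "\<forall>j\<in>BL J IV. f j \<in> BL K IW \<and> close e (IV j) (IW (f j))"
      using hall[OF fJ fK h1] by blast
    obtain g where g: "inj_on g (BL K IW)" "\<forall>k\<in>BL K IW. g k \<in> BL J IV \<and> close e (IW k) (IV (g k))"
      using hall[OF fK fJ h2] by blast
    have c1: "card (BL J IV) \<le> card (BL K IW)"
      by (rule card_inj_on_le[OF f(1) _ fK]) (use f(2) in auto)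
    have c2: "card (BL K IW) \<le> card (BL J IV)"
      by (rule card_inj_on_le[OF g(1) _ fJ]) (use g(2) in auto)
    have img: "f ` BL J IV = BL K IW"
    proof (rule card_subset_eq[OF fK])
      show "f ` BL J IV \<subseteq> BL K IW" using f(2) by auto
      show "card (f ` BL J IV) = card (BL K IW)" using card_image[OF f(1)] c1 c2 by simp
    qed
    have bij: "bij_betw f (BL J IV) (BL K IW)" unfolding bij_betw_def using f(1) img by simp
    have ilv: "interleaved sV sW e (UV j, snd V) (UW (f j), snd W)" if "j \<in> BL J IV" for j
      using summand_interleaved[OF dV dW that _ e0] f(2) that by blast
    have HX: "\<forall>X. X \<subseteq> Bsig (2 * e) V (BL J IV) UV \<and> finite X \<longrightarrow>
           (let NX = {k \<in> BL K IW. \<exists>j\<in>X. interleaved sV sW e (UV j, snd V) (UW k, snd W)}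
            in infinite NX \<or> card X \<le> card NX)"
    proof (intro allI impI)
      fix X assume X: "X \<subseteq> Bsig (2 * e) V (BL J IV) UV \<and> finite X"
      then have XB: "X \<subseteq> BL J IV" using sV by simp
      define NX where "NX = {k \<in> BL K IW. \<exists>j\<in>X. interleaved sV sW e (UV j, snd V) (UW k, snd W)}"
      have sub: "f ` X \<subseteq> NX" unfolding NX_def using XB f(2) ilv by auto
      have "infinite NX \<or> card X \<le> card NX"
      proof (cases "finite NX")
        case True
        have "card X = card (f ` X)" using card_image[OF inj_on_subset[OF f(1) XB]] by simp
        also have "\<dots> \<le> card NX" using card_mono[OF True sub] .
        finally show ?thesis by simp
      qed simp
      then show "let NX = {k \<in> BL K IW. \<exists>j\<in>X. interleaved sV sW e (UV j, snd V) (UW k, snd W)}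
            in infinite NX \<or> card X \<le> card NX" unfolding NX_def Let_def .
    qed
    have HY: "\<forall>Y. Y \<subseteq> Bsig (2 * e) W (BL K IW) UW \<and> finite Y \<longrightarrow>
           (let NY = {j \<in> BL J IV. \<exists>k\<in>Y. interleaved sV sW e (UV j, snd V) (UW k, snd W)}
            in infinite NY \<or> card Y \<le> card NY)"
    proof (intro allI impI)
      fix Y assume Y: "Y \<subseteq> Bsig (2 * e) W (BL K IW) UW \<and> finite Y"
      then have YB: "Y \<subseteq> BL K IW" using sW by simp
      define NY where "NY = {j \<in> BL J IV. \<exists>k\<in>Y. interleaved sV sW e (UV j, snd V) (UW k, snd W)}"
      let ?fi = "inv_into (BL J IV) f"
      have sub: "?fi ` Y \<subseteq> NY"
      proof
        fix j assume "j \<in> ?fi ` Y"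
        then obtain k where k: "k \<in> Y" "j = ?fi k" by blast
        have kB: "k \<in> f ` BL J IV" using k(1) YB img by blast
        have jB: "j \<in> BL J IV" using k(2) kB by (simp add: inv_into_into)
        have "f j = k" using k(2) kB by (simp add: f_inv_into_f)
        then have "interleaved sV sW e (UV j, snd V) (UW k, snd W)" using ilv[OF jB] by simp
        then show "j \<in> NY" unfolding NY_def using jB k(1) by blast
      qed
      have injY: "inj_on ?fi Y" by (rule inj_on_inv_into) (use YB img in simp)
      have "infinite NY \<or> card Y \<le> card NY"
      proof (cases "finite NY")
        case True
        have "card Y = card (?fi ` Y)" using card_image[OF injY] by simp
        also have "\<dots> \<le> card NY" using card_mono[OF True sub] .
        finally show ?thesis by simp
      qed simp
      then show "let NY = {j \<in> BL J IV. \<exists>k\<in>Y. interleaved sV sW e (UV j, snd V) (UW k, snd W)}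
            in infinite NY \<or> card Y \<le> card NY" unfolding NY_def Let_def .
    qed
    have M: "\<exists>J' K' \<sigma>. J' \<subseteq> BL J IV \<and> K' \<subseteq> BL K IW \<and> bij_betw \<sigma> J' K'
           \<and> (\<forall>j \<in> BL J IV - J'. shift_trivial (2 * e) (UV j, snd V))
           \<and> (\<forall>k \<in> BL K IW - K'. shift_trivial (2 * e) (UW k, snd W))
           \<and> (\<forall>j\<in>J'. interleaved sV sW e (UV j, snd V) (UW (\<sigma> j), snd W))"
      apply (rule exI[of _ "BL J IV"], rule exI[of _ "BL K IW"], rule exI[of _ f])
      using bij ilv by simp
    show ?thesis by (rule conjI[OF HX conjI[OF HY M]])
  qed
  show ?thesis
    apply (rule conjI[OF sV conjI[OF sW]])
    apply (rule impI)
    apply (erule main)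
    done
qed


end
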